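(* Let $\vec X=(X_1,\ldots,X_t)\in(\mathcal{H}_m^{\otimes n})^t$ satisfy $\sum_{i=1}^tX_i=\mathrm{id}$, and let $\mathcal{R}(\vec X)=\arg\min\{\|\vec X-\vec P\|'^2_2:\vec P\text{ is a sub-POVM}\}$. Then $$\|\mathcal{R}(\vec X)-\vec X\|'^2_2\le\frac{3(t+1)}{m^n}\sum_{i=1}^t\mathrm{Tr}\,\zeta(X_i)+6\Big(\frac{t}{m^n}\sum_{i=1}^t\mathrm{Tr}\,\zeta(X_i)\Big)^{1/2}.$$
   Context: $\mathcal{H}_m^{\otimes n}$ denotes Hermitian operators on $(\mathbb{C}^m)^{\otimes n}$. A sub-POVM is a tuple $(P_1,\ldots,P_t)$ of positive semidefinite operators with $\sum_iP_i\le\mathrm{id}$. For tuples, $\|\vec Y\|'^2_2=\sum_{i=1}^t\frac1{m^n}\mathrm{Tr}Y_i^\dagger Y_i$. $\zeta:\mathbb{R}\to\mathbb{R}$ is $\zeta(x)=x^2$ for $x\le0$ and $0$ otherwise, applied to Hermitian matrices through the spectral decomposition. *)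

theory Defs
  imports "HOL-Analysis.Analysis" "Jordan_Normal_Form.Schur_Decomposition"
begin

text \<open>Operators on (C^m)^{\<otimes>n} are represented as complex d x d matrices, d = m^n.
  A t-tuple of operators is a function nat => complex mat, indices i < t.\<close>

definition mtrace :: "complex mat \<Rightarrow> complex" where
  "mtrace A = (\<Sum>i<dim_row A. A $$ (i,i))"

definition hermitian_mat :: "nat \<Rightarrow> complex mat \<Rightarrow> bool" where
  "hermitian_mat d A \<longleftrightarrow> A \<in> carrier_mat d d \<and> mat_adjoint A = A"

definition psd_mat :: "nat \<Rightarrow> complex mat \<Rightarrow> bool" where
  "psd_mat d A \<longleftrightarrow> hermitian_mat d A \<and>
     (\<forall>v \<in> carrier_vec d. 0 \<le> Re (conjugate v \<bullet> (A *\<^sub>v v)))"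

definition unitary_mat :: "nat \<Rightarrow> complex mat \<Rightarrow> bool" where
  "unitary_mat d U \<longleftrightarrow> U \<in> carrier_mat d d \<and> U * mat_adjoint U = 1\<^sub>m d
     \<and> mat_adjoint U * U = 1\<^sub>m d"

definition tuple_sum :: "nat \<Rightarrow> nat \<Rightarrow> (nat \<Rightarrow> complex mat) \<Rightarrow> complex mat" where
  "tuple_sum d t P = Matrix.mat d d (\<lambda>(j,k). \<Sum>i<t. P i $$ (j,k))"

definition sub_POVM :: "nat \<Rightarrow> nat \<Rightarrow> (nat \<Rightarrow> complex mat) \<Rightarrow> bool" where
  "sub_POVM d t P \<longleftrightarrow> (\<forall>i<t. psd_mat d (P i)) \<and> psd_mat d (1\<^sub>m d - tuple_sum d t P)"

definition norm2' :: "nat \<Rightarrow> nat \<Rightarrow> (nat \<Rightarrow> complex mat) \<Rightarrow> real" where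
  "norm2' d t Y = (\<Sum>i<t. Re (mtrace (mat_adjoint (Y i) * Y i)) / real d)"

definition zeta :: "real \<Rightarrow> real" where
  "zeta x = (if x \<le> 0 then x\<^sup>2 else 0)"

definition mat_fun :: "nat \<Rightarrow> (real \<Rightarrow> real) \<Rightarrow> complex mat \<Rightarrow> complex mat" where
  "mat_fun d f A = (SOME B. \<exists>U lam. unitary_mat d U \<and>
       A = U * mat_diag d (\<lambda>j. complex_of_real (lam j)) * mat_adjoint U \<and>
       B = U * mat_diag d (\<lambda>j. complex_of_real (f (lam j))) * mat_adjoint U)"

end

theory Submission imports Defs "Jordan_Normal_Form.Spectral_Radius" begin
type_synonym cmat = "complex mat"

lemma adj_eq: "mat_adjoint (A::cmat) = Matrix.mat (dim_col A) (dim_row A) (\<lambda>(i,j). cnj (A $$ (j,i)))"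
  unfolding mat_adjoint_def
  apply (rule eq_matI)
  apply (simp_all add: mat_of_rows_def)
  done

lemma adj_index[simp]: "i < dim_col A \<Longrightarrow> j < dim_row A \<Longrightarrow> mat_adjoint (A::cmat) $$ (i,j) = cnj (A $$ (j,i))"
  unfolding adj_eq by simp
lemma adj_dims[simp]: "dim_row (mat_adjoint (A::cmat)) = dim_col A" "dim_col (mat_adjoint (A::cmat)) = dim_row A"
  unfolding adj_eq by simp_all
lemma adj_carrier[simp]: "(A::cmat) \<in> carrier_mat n m \<Longrightarrow> mat_adjoint A \<in> carrier_mat m n"
proof -
  assume a: "A \<in> carrier_mat n m"
  have "dim_row A = n" "dim_col A = m" using carrier_matD[OF a] by auto
  thus ?thesis by (intro carrier_matI) (simp_all only: adj_dims)
qed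
lemma adj_adj[simp]: "mat_adjoint (mat_adjoint (A::cmat)) = A"
  by (rule eq_matI, simp_all)

lemma adj_mult: assumes "(A::cmat) \<in> carrier_mat n k" "B \<in> carrier_mat k m"
  shows "mat_adjoint (A * B) = mat_adjoint B * mat_adjoint A"
  apply (rule eq_matI)
  using assms by (simp_all add: scalar_prod_def mult.commute)

lemma adj_add: assumes "(A::cmat) \<in> carrier_mat n m" "B \<in> carrier_mat n m"
  shows "mat_adjoint (A + B) = mat_adjoint A + mat_adjoint B"
  apply (rule eq_matI) using assms by simp_all

lemma adj_minus: assumes "(A::cmat) \<in> carrier_mat n m" "B \<in> carrier_mat n m"
  shows "mat_adjoint (A - B) = mat_adjoint A - mat_adjoint B"
  apply (rule eq_matI) using assms by simp_all

lemma adj_one[simp]: "mat_adjoint (1\<^sub>m n :: cmat) = 1\<^sub>m n"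
  by (rule eq_matI, simp_all)

lemma adj_diag: "mat_adjoint (mat_diag n f :: cmat) = mat_diag n (\<lambda>j. cnj (f j))"
  by (rule eq_matI, simp_all add: mat_diag_def)

lemma mtrace_comm: assumes "(A::cmat) \<in> carrier_mat n m" "B \<in> carrier_mat m n"
  shows "mtrace (A * B) = mtrace (B * A)"
proof -
  have "mtrace (A * B) = (\<Sum>i<n. \<Sum>k<m. A $$ (i,k) * B $$ (k,i))"
    using assms by (simp add: mtrace_def scalar_prod_def atLeast0LessThan)
  also have "\<dots> = (\<Sum>k<m. \<Sum>i<n. B $$ (k,i) * A $$ (i,k))"
    by (subst sum.swap, simp add: mult.commute)
  also have "\<dots> = mtrace (B * A)"
    using assms by (simp add: mtrace_def scalar_prod_def atLeast0LessThan)
  finally show ?thesis .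
qed

lemma mtrace_add: assumes "(A::cmat) \<in> carrier_mat n n" "B \<in> carrier_mat n n"
  shows "mtrace (A + B) = mtrace A + mtrace B"
  using assms by (simp add: mtrace_def sum.distrib)

lemma mtrace_diag: "mtrace (mat_diag n f :: cmat) = (\<Sum>j<n. f j)"
  by (simp add: mtrace_def mat_diag_def)

definition fro :: "cmat \<Rightarrow> real" where
  "fro A = (\<Sum>i<dim_row A. \<Sum>j<dim_col A. (cmod (A $$ (i,j)))\<^sup>2)"

lemma fro_trace: assumes "(A::cmat) \<in> carrier_mat n m"
  shows "Re (mtrace (mat_adjoint A * A)) = fro A"
proof -
  have "mtrace (mat_adjoint A * A) = (\<Sum>j<m. \<Sum>i<n. cnj (A $$ (i,j)) * A $$ (i,j))"
    using assms by (simp add: mtrace_def scalar_prod_def atLeast0LessThan)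
  moreover have rc: "\<And>z. Re (cnj z * z) = (cmod z)\<^sup>2"
    by (metis complex_norm_square mult.commute Re_complex_of_real)
  ultimately have "Re (mtrace (mat_adjoint A * A)) = (\<Sum>j<m. \<Sum>i<n. (cmod (A $$ (i,j)))\<^sup>2)"
    by (simp only: Re_sum rc)
  also have "\<dots> = fro A" unfolding fro_def using assms by (subst sum.swap, simp)
  finally show ?thesis .
qed

lemma cscalar_self: assumes "(w::complex vec) \<in> carrier_vec n"
  shows "w \<bullet>c w = complex_of_real (\<Sum>l<n. (cmod (w $ l))\<^sup>2)"
proof -
  have "w \<bullet>c w = (\<Sum>l<n. w $ l * cnj (w $ l))"
    using assms by (simp add: scalar_prod_def atLeast0LessThan)
  also have "\<dots> = (\<Sum>l<n. complex_of_real ((cmod (w $ l))\<^sup>2))"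
    by (rule sum.cong[OF refl], rule complex_norm_square[symmetric])
  finally show ?thesis by simp
qed

lemma unitary_onb: assumes v: "(v::complex vec) \<in> carrier_vec n" and v0: "v \<noteq> 0\<^sub>v n" and n: "n > 0"
  shows "\<exists>U c. unitary_mat n U \<and> c \<noteq> 0 \<and> col U 0 = c \<cdot>\<^sub>v v"
proof -
  interpret cof_vec_space n "TYPE(complex)" .
  define b where "b = basis_completion v"
  define ws where "ws = gram_schmidt n b"
  from basis_completion[OF v v0, folded b_def]
  have dist_b: "distinct b" and indep: "\<not> lin_dep (set b)" and b: "set b \<subseteq> carrier_vec n" and hdb: "hd b = v"
    and len_b: "length b = n" by auto
  from hdb len_b n obtain vs where bv: "b = v # vs" by (cases b, auto)
  from gram_schmidt_result[OF b dist_b indep ws_def]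
  have ws: "set ws \<subseteq> carrier_vec n" "corthogonal ws" "length ws = n" 
    by (auto simp: len_b)
  from gram_schmidt_hd[OF v, of vs, folded bv] have hdws: "hd ws = v" unfolding ws_def .
  define r where "r = (\<lambda>j. \<Sum>l<n. (cmod (ws ! j $ l))\<^sup>2)"
  have wsc: "\<And>j. j < n \<Longrightarrow> ws ! j \<in> carrier_vec n" using ws by auto
  have rr: "\<And>i j. i < n \<Longrightarrow> j < n \<Longrightarrow> ws ! i \<bullet>c ws ! j = (if i = j then complex_of_real (r i) else 0)"
    using ws(2,3) cscalar_self[OF wsc] unfolding r_def corthogonal_def by auto
  have rpos: "\<And>j. j < n \<Longrightarrow> r j > 0"
  proof -
    fix j assume j: "j < n"
    have "ws ! j \<bullet>c ws ! j \<noteq> 0" using ws(2,3) j unfolding corthogonal_def by auto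
    hence "r j \<noteq> 0" using rr[OF j j] by auto
    moreover have "r j \<ge> 0" unfolding r_def by (intro sum_nonneg, simp)
    ultimately show "r j > 0" by simp
  qed
  define U where "U = Matrix.mat n n (\<lambda>(i,j). complex_of_real (1 / sqrt (r j)) * (ws ! j $ i))"
  have Uc: "U \<in> carrier_mat n n" unfolding U_def by simp
  have UU: "mat_adjoint U * U = 1\<^sub>m n"
  proof (rule eq_matI)
    fix i j assume i: "i < dim_row (1\<^sub>m n :: cmat)" and j: "j < dim_col (1\<^sub>m n :: cmat)"
    hence i: "i < n" and j: "j < n" by auto
    have "(mat_adjoint U * U) $$ (i,j) = (\<Sum>l<n. cnj (U $$ (l,i)) * U $$ (l,j))"
      using i j Uc by (simp add: scalar_prod_def atLeast0LessThan)
    also have "\<dots> = (\<Sum>l<n. complex_of_real (1 / sqrt (r i)) * complex_of_real (1 / sqrt (r j)) * ((ws ! j $ l) * cnj (ws ! i $ l)))"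
      using i j unfolding U_def by (intro sum.cong refl, simp add: ac_simps)
    also have "\<dots> = complex_of_real (1 / sqrt (r i)) * complex_of_real (1 / sqrt (r j)) * (ws ! j \<bullet>c ws ! i)"
      using wsc[OF i] wsc[OF j] by (simp add: scalar_prod_def atLeast0LessThan sum_distrib_left)
    also have "\<dots> = 1\<^sub>m n $$ (i,j)"
    proof (cases "i = j")
      case True
      have "complex_of_real (1 / sqrt (r j)) * complex_of_real (1 / sqrt (r j)) * complex_of_real (r j) = 1"
        using rpos[OF j] by (simp flip: of_real_mult)
      thus ?thesis using True rr[OF j j] i by simp
    next
      case False
      thus ?thesis using rr[OF j i] i j by simp
    qed
    finally show "(mat_adjoint U * U) $$ (i,j) = 1\<^sub>m n $$ (i,j)" .
  qed (use Uc in simp_all)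
  have UU2: "U * mat_adjoint U = 1\<^sub>m n"
    by (rule mat_mult_left_right_inverse[OF adj_carrier[OF Uc] Uc UU])
  have "unitary_mat n U" unfolding unitary_mat_def using Uc UU UU2 by simp
  moreover have "col U 0 = complex_of_real (1 / sqrt (r 0)) \<cdot>\<^sub>v v"
  proof -
    have "ws ! 0 = v" using hdws ws(3) n by (cases ws, auto)
    thus ?thesis unfolding U_def using n v by (intro eq_vecI, auto)
  qed
  moreover have "complex_of_real (1 / sqrt (r 0)) \<noteq> 0" using rpos[OF n] by simp
  ultimately show ?thesis by blast
qed


lemma mult_cnj_cmod: "z * cnj z = complex_of_real ((cmod z)\<^sup>2)" "cnj z * z = complex_of_real ((cmod z)\<^sup>2)"
  by (metis complex_norm_square, metis complex_norm_square mult.commute)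

lemma mat_diag_dims[simp]: "dim_row (mat_diag n f) = n" "dim_col (mat_diag n f) = n"
  unfolding mat_diag_def by simp_all

lemma udu_index: assumes U: "(U::cmat) \<in> carrier_mat n n" and i: "i < n" and j: "j < n"
  shows "(U * mat_diag n f * mat_adjoint U) $$ (i,j) = (\<Sum>l<n. U $$ (i,l) * f l * cnj (U $$ (j,l)))"
proof -
  have "U * mat_diag n f = Matrix.mat n n (\<lambda>(i,j). U $$ (i,j) * f j)"
    by (rule mat_diag_mult_right[OF U])
  thus ?thesis using U i j by (simp add: scalar_prod_def atLeast0LessThan)
qed

lemma unitary_mult: assumes "unitary_mat n U" "unitary_mat n V"
  shows "unitary_mat n (U * V)"
proof -
  have U: "U \<in> carrier_mat n n" and V: "V \<in> carrier_mat n n"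
    and u1: "U * mat_adjoint U = 1\<^sub>m n" and u2: "mat_adjoint U * U = 1\<^sub>m n"
    and v1: "V * mat_adjoint V = 1\<^sub>m n" and v2: "mat_adjoint V * V = 1\<^sub>m n"
    using assms unfolding unitary_mat_def by auto
  have a: "mat_adjoint (U * V) = mat_adjoint V * mat_adjoint U" by (rule adj_mult[OF U V])
  have Ua: "mat_adjoint U \<in> carrier_mat n n" and Va: "mat_adjoint V \<in> carrier_mat n n" using U V by auto
  have "U * V * (mat_adjoint V * mat_adjoint U) = U * (V * (mat_adjoint V * mat_adjoint U))"
    by (rule assoc_mult_mat[OF U V mult_carrier_mat[OF Va Ua]])
  also have "\<dots> = U * (V * mat_adjoint V * mat_adjoint U)"
    by (simp add: assoc_mult_mat[OF V Va Ua])
  also have "\<dots> = U * (V * mat_adjoint V) * mat_adjoint U"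
    by (rule assoc_mult_mat[OF U mult_carrier_mat[OF V Va] Ua, symmetric])
  also have "\<dots> = 1\<^sub>m n" using u1 v1 U by simp
  finally have 1: "U * V * mat_adjoint (U * V) = 1\<^sub>m n" using a by simp
  have "mat_adjoint V * mat_adjoint U * (U * V) = mat_adjoint V * (mat_adjoint U * (U * V))"
    by (rule assoc_mult_mat[OF Va Ua mult_carrier_mat[OF U V]])
  also have "\<dots> = mat_adjoint V * (mat_adjoint U * U * V)"
    by (simp add: assoc_mult_mat[OF Ua U V])
  also have "\<dots> = mat_adjoint V * (mat_adjoint U * U) * V"
    by (rule assoc_mult_mat[OF Va mult_carrier_mat[OF Ua U] V, symmetric])
  also have "\<dots> = 1\<^sub>m n" using u2 v2 V by simp
  finally have 2: "mat_adjoint (U * V) * (U * V) = 1\<^sub>m n" using a by simp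
  show ?thesis unfolding unitary_mat_def using 1 2 U V by simp
qed

definition ext2 :: "nat \<Rightarrow> complex \<Rightarrow> cmat \<Rightarrow> cmat" where
  "ext2 k a X = Matrix.mat (Suc k) (Suc k) (\<lambda>(i,j). if i = 0 \<and> j = 0 then a else if i = 0 \<or> j = 0 then 0 else X $$ (i - 1, j - 1))"

lemma ext2_carrier[simp]: "ext2 k a X \<in> carrier_mat (Suc k) (Suc k)"
  unfolding ext2_def by simp
lemma ext2_dims[simp]: "dim_row (ext2 k a X) = Suc k" "dim_col (ext2 k a X) = Suc k"
  unfolding ext2_def by simp_all

lemma ext2_mult: assumes X: "X \<in> carrier_mat k k" and Y: "Y \<in> carrier_mat k k"
  shows "ext2 k a X * ext2 k b Y = ext2 k (a * b) (X * Y)"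
proof (rule eq_matI)
  fix i j assume "i < dim_row (ext2 k (a * b) (X * Y))" "j < dim_col (ext2 k (a * b) (X * Y))"
  hence i: "i < Suc k" and j: "j < Suc k" unfolding ext2_def by auto
  have "(ext2 k a X * ext2 k b Y) $$ (i,j) = (\<Sum>l<Suc k. ext2 k a X $$ (i,l) * ext2 k b Y $$ (l,j))"
    using i j by (simp add: scalar_prod_def atLeast0LessThan del: sum.lessThan_Suc)
  also have "\<dots> = ext2 k a X $$ (i,0) * ext2 k b Y $$ (0,j) + (\<Sum>l<k. ext2 k a X $$ (i,Suc l) * ext2 k b Y $$ (Suc l,j))"
    by (rule sum.lessThan_Suc_shift)
  also have "\<dots> = ext2 k (a * b) (X * Y) $$ (i,j)"
  proof (cases i)
    case 0
    then show ?thesis using j unfolding ext2_def by (cases j, simp_all)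
  next
    case (Suc i')
    then show ?thesis using i j X Y unfolding ext2_def
      by (cases j, simp_all add: scalar_prod_def atLeast0LessThan)
  qed
  finally show "(ext2 k a X * ext2 k b Y) $$ (i,j) = ext2 k (a * b) (X * Y) $$ (i,j)" .
qed (simp_all add: ext2_def)

lemma ext2_adj: assumes X: "X \<in> carrier_mat k k"
  shows "mat_adjoint (ext2 k a X) = ext2 k (cnj a) (mat_adjoint X)"
  by (rule eq_matI, insert X, auto simp: ext2_def)

lemma ext2_one: "ext2 k 1 (1\<^sub>m k) = 1\<^sub>m (Suc k)"
  by (rule eq_matI, auto simp: ext2_def)

lemma ext2_diag: "ext2 k (f 0) (mat_diag k (\<lambda>j. f (Suc j))) = mat_diag (Suc k) f"
  by (rule eq_matI, auto simp: ext2_def mat_diag_def)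

lemma ext2_unitary: assumes "unitary_mat k P" shows "unitary_mat (Suc k) (ext2 k 1 P)"
proof -
  have P: "P \<in> carrier_mat k k" and p1: "P * mat_adjoint P = 1\<^sub>m k" and p2: "mat_adjoint P * P = 1\<^sub>m k"
    using assms unfolding unitary_mat_def by auto
  show ?thesis unfolding unitary_mat_def
    using ext2_mult[OF P adj_carrier[OF P]] ext2_mult[OF adj_carrier[OF P] P] ext2_adj[OF P] p1 p2 ext2_one
    by simp
qed


lemma adj3: assumes "(A::cmat) \<in> carrier_mat n n" "B \<in> carrier_mat n n" "C \<in> carrier_mat n n"
  shows "mat_adjoint (A * B * C) = mat_adjoint C * mat_adjoint B * mat_adjoint A"
proof -
  have "mat_adjoint (A * B * C) = mat_adjoint C * mat_adjoint (A * B)"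
    by (rule adj_mult[OF mult_carrier_mat[OF assms(1,2)] assms(3)])
  also have "\<dots> = mat_adjoint C * (mat_adjoint B * mat_adjoint A)" using adj_mult[OF assms(1,2)] by simp
  also have "\<dots> = mat_adjoint C * mat_adjoint B * mat_adjoint A"
    using assms by (intro assoc_mult_mat[symmetric], auto)
  finally show ?thesis .
qed

lemma unitary_conj_back: assumes U: "unitary_mat n U" and A: "(A::cmat) \<in> carrier_mat n n"
  shows "U * (mat_adjoint U * A * U) * mat_adjoint U = A"
proof -
  have Uc: "U \<in> carrier_mat n n" and u1: "U * mat_adjoint U = 1\<^sub>m n"
    using U unfolding unitary_mat_def by auto
  have Ua: "mat_adjoint U \<in> carrier_mat n n" using Uc by simp
  have "U * (mat_adjoint U * A * U) * mat_adjoint U = U * (mat_adjoint U * A * U * mat_adjoint U)"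
    using Uc Ua A by (intro assoc_mult_mat, auto)
  also have "mat_adjoint U * A * U * mat_adjoint U = mat_adjoint U * A * (U * mat_adjoint U)"
    using Uc Ua A by (intro assoc_mult_mat, auto)
  also have "\<dots> = mat_adjoint U * A" using u1 Ua A by simp
  also have "U * (mat_adjoint U * A) = (U * mat_adjoint U) * A"
    using Uc Ua A by (intro assoc_mult_mat[symmetric], auto)
  also have "\<dots> = A" using u1 A by simp
  finally show ?thesis .
qed

lemma assoc5: assumes A: "(A::cmat) \<in> carrier_mat n n" and B: "B \<in> carrier_mat n n" and C: "C \<in> carrier_mat n n"
  and D: "D \<in> carrier_mat n n" and F: "F \<in> carrier_mat n n"
  shows "A * (B * C * D) * F = (A * B) * C * (D * F)"
proof -
  have BCD: "B * C * D \<in> carrier_mat n n" using B C D by simp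
  have DF: "D * F \<in> carrier_mat n n" using D F by simp
  have CDF: "C * (D * F) \<in> carrier_mat n n" using C DF by simp
  have "A * (B * C * D) * F = A * ((B * C * D) * F)" by (rule assoc_mult_mat[OF A BCD F])
  also have "(B * C * D) * F = (B * C) * (D * F)" using B C D F by (intro assoc_mult_mat, auto)
  also have "\<dots> = B * (C * (D * F))" by (rule assoc_mult_mat[OF B C DF])
  also have "A * (B * (C * (D * F))) = (A * B) * (C * (D * F))" by (rule assoc_mult_mat[OF A B CDF, symmetric])
  also have "\<dots> = (A * B) * C * (D * F)" using A B C DF by (intro assoc_mult_mat[symmetric], auto)
  finally show ?thesis .
qed

theorem spectral_thm: "hermitian_mat n A \<Longrightarrow>
  \<exists>U lam. unitary_mat n U \<and> A = U * mat_diag n (\<lambda>j. complex_of_real (lam j)) * mat_adjoint U"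
proof (induction n arbitrary: A)
  case 0
  have A: "A \<in> carrier_mat 0 0" using 0 unfolding hermitian_mat_def by auto
  have "unitary_mat 0 (1\<^sub>m 0)" unfolding unitary_mat_def by simp
  moreover have "A = 1\<^sub>m 0 * mat_diag 0 (\<lambda>j. complex_of_real 0) * mat_adjoint (1\<^sub>m 0)"
    by (rule eq_matI, insert A, auto)
  ultimately show ?case by (intro exI[of _ "1\<^sub>m 0"] exI[of _ "\<lambda>_. 0::real"]) simp
next
  case (Suc k)
  let ?n = "Suc k"
  have A: "A \<in> carrier_mat ?n ?n" and Ah: "mat_adjoint A = A" using Suc.prems unfolding hermitian_mat_def by auto
  obtain e where "e \<in> spectrum A" using spectrum_non_empty[OF A] by auto
  then obtain v where v: "v \<in> carrier_vec ?n" and v0: "v \<noteq> 0\<^sub>v ?n" and Av: "A *\<^sub>v v = e \<cdot>\<^sub>v v"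
    unfolding spectrum_def eigenvalue_def eigenvector_def using A by auto
  obtain W c where W: "unitary_mat ?n W" and c0: "c \<noteq> 0" and cW: "col W 0 = c \<cdot>\<^sub>v v"
    using unitary_onb[OF v v0] by auto
  have Wc: "W \<in> carrier_mat ?n ?n" and w1: "W * mat_adjoint W = 1\<^sub>m ?n" and w2: "mat_adjoint W * W = 1\<^sub>m ?n"
    using W unfolding unitary_mat_def by auto
  have AW0: "\<And>l. l < ?n \<Longrightarrow> (\<Sum>m<?n. A $$ (l,m) * W $$ (m,0)) = e * W $$ (l,0)"
  proof -
    fix l assume l: "l < ?n"
    have "A *\<^sub>v col W 0 = c \<cdot>\<^sub>v (A *\<^sub>v v)" unfolding cW by (rule mult_mat_vec[OF A v])
    also have "\<dots> = c \<cdot>\<^sub>v (e \<cdot>\<^sub>v v)" using Av by simp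
    also have "\<dots> = e \<cdot>\<^sub>v col W 0" unfolding cW by (simp add: smult_smult_assoc mult.commute)
    finally have "A *\<^sub>v col W 0 = e \<cdot>\<^sub>v col W 0" .
    hence "(A *\<^sub>v col W 0) $ l = (e \<cdot>\<^sub>v col W 0) $ l" by simp
    thus "(\<Sum>m<?n. A $$ (l,m) * W $$ (m,0)) = e * W $$ (l,0)"
      using l A Wc by (simp add: scalar_prod_def atLeast0LessThan del: sum.lessThan_Suc)
  qed
  define B where "B = mat_adjoint W * A * W"
  have Bc: "B \<in> carrier_mat ?n ?n" unfolding B_def using Wc A by auto
  have Bh: "mat_adjoint B = B" unfolding B_def using adj3[OF adj_carrier[OF Wc] A Wc] Ah by simp
  have B_eq: "B = mat_adjoint W * (A * W)" unfolding B_def using Wc A by (intro assoc_mult_mat, auto)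
  have Bi0: "\<And>i. i < ?n \<Longrightarrow> B $$ (i,0) = (if i = 0 then e else 0)"
  proof -
    fix i assume i: "i < ?n"
    have "B $$ (i,0) = (\<Sum>l<?n. cnj (W $$ (l,i)) * (\<Sum>m<?n. A $$ (l,m) * W $$ (m,0)))"
      unfolding B_eq using i Wc A by (simp add: scalar_prod_def atLeast0LessThan del: sum.lessThan_Suc)
    also have "\<dots> = e * (\<Sum>l<?n. cnj (W $$ (l,i)) * W $$ (l,0))"
      by (simp add: AW0 sum_distrib_left ac_simps del: sum.lessThan_Suc)
    also have "(\<Sum>l<?n. cnj (W $$ (l,i)) * W $$ (l,0)) = (mat_adjoint W * W) $$ (i,0)"
      using i Wc by (simp add: scalar_prod_def atLeast0LessThan del: sum.lessThan_Suc)
    also have "\<dots> = (if i = 0 then 1 else 0)" using w2 i by simp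
    finally show "B $$ (i,0) = (if i = 0 then e else 0)" by simp
  qed
  have ereal: "cnj e = e"
  proof -
    have "mat_adjoint B $$ (0,0) = cnj (B $$ (0,0))" using Bc by simp
    thus ?thesis using Bh Bi0[of 0] by simp
  qed
  have B0j: "\<And>j. j < ?n \<Longrightarrow> B $$ (0,j) = (if j = 0 then e else 0)"
  proof -
    fix j assume j: "j < ?n"
    have "B $$ (0,j) = mat_adjoint B $$ (0,j)" using Bh by simp
    also have "\<dots> = cnj (B $$ (j,0))" using Bc j by simp
    finally show "B $$ (0,j) = (if j = 0 then e else 0)" using Bi0[OF j] ereal by simp
  qed
  define C where "C = Matrix.mat k k (\<lambda>(i,j). B $$ (Suc i, Suc j))"
  have Cc: "C \<in> carrier_mat k k" unfolding C_def by simp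
  have Ch: "hermitian_mat k C"
  proof -
    have "mat_adjoint C = C"
    proof (rule eq_matI)
      fix i j assume "i < dim_row C" "j < dim_col C"
      hence i: "i < k" and j: "j < k" using Cc by auto
      have "mat_adjoint C $$ (i,j) = cnj (B $$ (Suc j, Suc i))" using i j unfolding C_def by simp
      also have "\<dots> = mat_adjoint B $$ (Suc i, Suc j)" using i j Bc by simp
      also have "\<dots> = C $$ (i,j)" using Bh i j unfolding C_def by simp
      finally show "mat_adjoint C $$ (i,j) = C $$ (i,j)" .
    qed (use Cc in auto)
    thus ?thesis unfolding hermitian_mat_def using Cc by simp
  qed
  have BC: "B = ext2 k e C"
  proof (rule eq_matI)
    fix i j assume "i < dim_row (ext2 k e C)" "j < dim_col (ext2 k e C)"
    hence i: "i < ?n" and j: "j < ?n" by auto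
    show "B $$ (i,j) = ext2 k e C $$ (i,j)"
    proof (cases "i = 0 \<or> j = 0")
      case True
      thus ?thesis using Bi0[OF i] B0j[OF j] i j unfolding ext2_def by auto
    next
      case False
      then obtain i' j' where "i = Suc i'" "j = Suc j'" by (cases i; cases j; auto)
      thus ?thesis using i j unfolding ext2_def C_def by simp
    qed
  qed (use Bc in auto)
  obtain P lam where P: "unitary_mat k P" and CP: "C = P * mat_diag k (\<lambda>j. complex_of_real (lam j)) * mat_adjoint P"
    using Suc.IH[OF Ch] by blast
  have Pc: "P \<in> carrier_mat k k" using P unfolding unitary_mat_def by auto
  define lam2 where "lam2 = (\<lambda>j. case j of 0 \<Rightarrow> Re e | Suc j' \<Rightarrow> lam j')"
  define D where "D = mat_diag k (\<lambda>j. complex_of_real (lam j))"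
  have Dc: "D \<in> carrier_mat k k" unfolding D_def by simp
  have eR: "complex_of_real (Re e) = e" using ereal by (metis Reals_cnj_iff complex_is_Real_iff of_real_Re)
  have ED: "ext2 k e D = mat_diag ?n (\<lambda>j. complex_of_real (lam2 j))"
    using ext2_diag[of k "\<lambda>j. complex_of_real (lam2 j)"] eR unfolding D_def lam2_def by simp
  define E where "E = ext2 k 1 P"
  have Ec: "E \<in> carrier_mat ?n ?n" unfolding E_def by simp
  have Eadj: "mat_adjoint E = ext2 k 1 (mat_adjoint P)" unfolding E_def using ext2_adj[OF Pc] by simp
  have "E * ext2 k e D * mat_adjoint E = ext2 k (1 * e * 1) (P * D * mat_adjoint P)"
    unfolding E_def using ext2_adj[OF Pc] ext2_mult[OF Pc Dc, of 1 e] ext2_mult[OF mult_carrier_mat[OF Pc Dc] adj_carrier[OF Pc], of "1 * e" 1]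
    by simp
  hence EDE: "E * mat_diag ?n (\<lambda>j. complex_of_real (lam2 j)) * mat_adjoint E = B"
    using ED BC CP unfolding D_def by simp
  define U where "U = W * E"
  have U: "unitary_mat ?n U" unfolding U_def E_def by (rule unitary_mult[OF W ext2_unitary[OF P]])
  have Dgc: "mat_diag ?n (\<lambda>j. complex_of_real (lam2 j)) \<in> carrier_mat ?n ?n" by simp
  have "A = W * B * mat_adjoint W"
    using unitary_conj_back[OF W A] unfolding B_def by simp
  also have "\<dots> = W * (E * mat_diag ?n (\<lambda>j. complex_of_real (lam2 j)) * mat_adjoint E) * mat_adjoint W"
    using EDE by simp
  also have "\<dots> = U * mat_diag ?n (\<lambda>j. complex_of_real (lam2 j)) * mat_adjoint U"
  proof -
    have au: "mat_adjoint U = mat_adjoint E * mat_adjoint W" unfolding U_def by (rule adj_mult[OF Wc Ec])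
    have Ea: "mat_adjoint E \<in> carrier_mat ?n ?n" and Wa: "mat_adjoint W \<in> carrier_mat ?n ?n" using Ec Wc by auto
    show ?thesis unfolding au unfolding U_def
      by (rule assoc5[OF Wc Ec Dgc Ea Wa])
  qed
  finally show ?case using U by blast
qed


lemma mult_carrier_sq[simp]: "(A::cmat) \<in> carrier_mat n n \<Longrightarrow> B \<in> carrier_mat n n \<Longrightarrow> A * B \<in> carrier_mat n n"
  by simp

lemma adj_carrier_sq: "(A::cmat) \<in> carrier_mat n n \<Longrightarrow> mat_adjoint A \<in> carrier_mat n n"
  by simp

lemma unitary_adj: "unitary_mat n U \<Longrightarrow> unitary_mat n (mat_adjoint U)"
  unfolding unitary_mat_def by auto

lemma trace_unitary: assumes U: "unitary_mat n U" and M: "(M::cmat) \<in> carrier_mat n n"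
  shows "mtrace (U * M * mat_adjoint U) = mtrace M"
proof -
  have Uc: "U \<in> carrier_mat n n" and u2: "mat_adjoint U * U = 1\<^sub>m n" using U unfolding unitary_mat_def by auto
  have "mtrace (U * M * mat_adjoint U) = mtrace (mat_adjoint U * (U * M))"
    by (rule mtrace_comm[OF mult_carrier_mat[OF Uc M] adj_carrier[OF Uc]])
  also have "mat_adjoint U * (U * M) = (mat_adjoint U * U) * M"
    using Uc M by (intro assoc_mult_mat[symmetric], auto)
  also have "\<dots> = M" using u2 M by simp
  finally show ?thesis .
qed

lemma fro_carrier_trace: "(A::cmat) \<in> carrier_mat n m \<Longrightarrow> fro A = Re (mtrace (mat_adjoint A * A))"
  using fro_trace by simp

lemma fro_unitary: assumes U: "unitary_mat n U" and A: "(A::cmat) \<in> carrier_mat n n"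
  shows "fro (U * A * mat_adjoint U) = fro A"
proof -
  have Uc: "U \<in> carrier_mat n n" and u2: "mat_adjoint U * U = 1\<^sub>m n" using U unfolding unitary_mat_def by auto
  have Ua: "mat_adjoint U \<in> carrier_mat n n" and Aa: "mat_adjoint A \<in> carrier_mat n n" using Uc A by auto
  have "mat_adjoint (U * A * mat_adjoint U) = U * mat_adjoint A * mat_adjoint U"
    using adj3[OF Uc A Ua] by simp
  hence "mat_adjoint (U * A * mat_adjoint U) * (U * A * mat_adjoint U) = U * (mat_adjoint A * A) * mat_adjoint U"
  proof -
    assume h: "mat_adjoint (U * A * mat_adjoint U) = U * mat_adjoint A * mat_adjoint U"
    have "U * mat_adjoint A * mat_adjoint U * (U * A * mat_adjoint U)
       = U * mat_adjoint A * (mat_adjoint U * U) * A * mat_adjoint U"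
      using Uc Ua A Aa by (simp add: assoc_mult_mat[of _ n n _ n _ n] mult_carrier_sq adj_carrier_sq)
    also have "\<dots> = U * (mat_adjoint A * A) * mat_adjoint U"
      using Uc Ua A Aa u2 by (simp add: assoc_mult_mat[of _ n n _ n _ n] mult_carrier_sq adj_carrier_sq)
    finally show ?thesis using h by simp
  qed
  hence "fro (U * A * mat_adjoint U) = Re (mtrace (U * (mat_adjoint A * A) * mat_adjoint U))"
    using fro_carrier_trace[of "U * A * mat_adjoint U" n n] mult_carrier_sq[OF mult_carrier_sq[OF Uc A] Ua] by simp
  also have "\<dots> = Re (mtrace (mat_adjoint A * A))" using trace_unitary[OF U mult_carrier_sq[OF Aa A]] by simp
  also have "\<dots> = fro A" using fro_trace[OF A] by simp
  finally show ?thesis .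
qed

lemma fro_unitary2: assumes U: "unitary_mat n U" and A: "(A::cmat) \<in> carrier_mat n n"
  shows "fro (mat_adjoint U * A * U) = fro A"
  using fro_unitary[OF unitary_adj[OF U] A] by simp

lemma conj_udu: assumes G: "(G::cmat) \<in> carrier_mat n n" and U: "U \<in> carrier_mat n n"
  shows "mat_adjoint G * (U * mat_diag n f * mat_adjoint U) * G
      = (mat_adjoint G * U) * mat_diag n f * mat_adjoint (mat_adjoint G * U)"
proof -
  have "mat_adjoint (mat_adjoint G * U) = mat_adjoint U * G" using adj_mult[OF adj_carrier[OF G] U] by simp
  thus ?thesis using assoc5[OF adj_carrier[OF G] U mat_diag_dim adj_carrier[OF U] G] by simp
qed


lemma sum3_swap: "(\<Sum>j\<in>J. \<Sum>k\<in>K. \<Sum>l\<in>L. (f j k l :: complex)) = (\<Sum>l\<in>L. \<Sum>j\<in>J. \<Sum>k\<in>K. f j k l)"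
proof -
  have "(\<Sum>j\<in>J. \<Sum>k\<in>K. \<Sum>l\<in>L. f j k l) = (\<Sum>j\<in>J. \<Sum>l\<in>L. \<Sum>k\<in>K. f j k l)"
    by (intro sum.cong refl, rule sum.swap)
  also have "\<dots> = (\<Sum>l\<in>L. \<Sum>j\<in>J. \<Sum>k\<in>K. f j k l)" by (rule sum.swap)
  finally show ?thesis .
qed

lemma sum4_swap: "(\<Sum>p\<in>P. \<Sum>q\<in>Q. \<Sum>j\<in>J. \<Sum>k\<in>K. (f p q j k :: complex)) = (\<Sum>j\<in>J. \<Sum>k\<in>K. \<Sum>p\<in>P. \<Sum>q\<in>Q. f p q j k)"
proof -
  have "(\<Sum>p\<in>P. \<Sum>q\<in>Q. \<Sum>j\<in>J. \<Sum>k\<in>K. f p q j k) = (\<Sum>p\<in>P. \<Sum>j\<in>J. \<Sum>q\<in>Q. \<Sum>k\<in>K. f p q j k)"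
    by (intro sum.cong refl, rule sum.swap)
  also have "\<dots> = (\<Sum>p\<in>P. \<Sum>j\<in>J. \<Sum>k\<in>K. \<Sum>q\<in>Q. f p q j k)"
    by (intro sum.cong refl, rule sum.swap)
  also have "\<dots> = (\<Sum>j\<in>J. \<Sum>p\<in>P. \<Sum>k\<in>K. \<Sum>q\<in>Q. f p q j k)" by (rule sum.swap)
  also have "\<dots> = (\<Sum>j\<in>J. \<Sum>k\<in>K. \<Sum>p\<in>P. \<Sum>q\<in>Q. f p q j k)"
    by (intro sum.cong refl, rule sum.swap)
  finally show ?thesis .
qed

lemma quad_form_udu: assumes H: "(H::cmat) \<in> carrier_mat n n" and v: "v \<in> carrier_vec n"
  shows "conjugate v \<bullet> ((H * mat_diag n (\<lambda>j. complex_of_real (f j)) * mat_adjoint H) *\<^sub>v v)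
     = (\<Sum>l<n. complex_of_real (f l) * (cnj (\<Sum>k<n. cnj (H $$ (k,l)) * v $ k) * (\<Sum>k<n. cnj (H $$ (k,l)) * v $ k)))"
proof -
  let ?M = "H * mat_diag n (\<lambda>j. complex_of_real (f j)) * mat_adjoint H"
  have Mc: "?M \<in> carrier_mat n n" using H by simp
  have dM: "dim_row ?M = n" "dim_col ?M = n" using Mc by auto
  have dv: "dim_vec v = n" "dim_row H = n" "dim_col H = n" using v H by auto
  have "conjugate v \<bullet> (?M *\<^sub>v v) = (\<Sum>j<n. conjugate v $ j * (?M *\<^sub>v v) $ j)"
    unfolding scalar_prod_def using dM by (simp add: atLeast0LessThan)
  also have "\<dots> = (\<Sum>j<n. cnj (v $ j) * (\<Sum>k<n. ?M $$ (j,k) * v $ k))"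
    by (intro sum.cong refl, simp add: dM dv scalar_prod_def atLeast0LessThan)
  also have "\<dots> = (\<Sum>j<n. \<Sum>k<n. \<Sum>l<n. cnj (v $ j) * (H $$ (j,l) * complex_of_real (f l) * cnj (H $$ (k,l))) * v $ k)"
    by (intro sum.cong refl, simp add: udu_index[OF H] sum_distrib_left sum_distrib_right mult_ac)
  also have "\<dots> = (\<Sum>l<n. \<Sum>j<n. \<Sum>k<n. cnj (v $ j) * (H $$ (j,l) * complex_of_real (f l) * cnj (H $$ (k,l))) * v $ k)"
    by (rule sum3_swap)
  also have "\<dots> = (\<Sum>l<n. complex_of_real (f l) * (cnj (\<Sum>k<n. cnj (H $$ (k,l)) * v $ k) * (\<Sum>k<n. cnj (H $$ (k,l)) * v $ k)))"
    by (intro sum.cong refl, simp add: cnj_sum sum_product sum_distrib_left ac_simps)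
  finally show ?thesis .
qed

lemma psd_udu: assumes H: "(H::cmat) \<in> carrier_mat n n" and f: "\<And>j. f j \<ge> 0"
  shows "psd_mat n (H * mat_diag n (\<lambda>j. complex_of_real (f j)) * mat_adjoint H)"
proof -
  let ?D = "mat_diag n (\<lambda>j. complex_of_real (f j))"
  have "mat_adjoint (H * ?D * mat_adjoint H) = H * mat_adjoint ?D * mat_adjoint H"
    using adj3[OF H mat_diag_dim adj_carrier[OF H]] by simp
  also have "mat_adjoint ?D = ?D" by (simp add: adj_diag)
  finally have herm: "hermitian_mat n (H * ?D * mat_adjoint H)"
    unfolding hermitian_mat_def using H by simp
  have cy: "\<And>y. cnj y * y = complex_of_real ((cmod y)\<^sup>2)"
    by (metis complex_norm_square mult.commute)
  have "0 \<le> Re (conjugate v \<bullet> ((H * ?D * mat_adjoint H) *\<^sub>v v))" if v: "v \<in> carrier_vec n" for v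
  proof -
    have "Re (conjugate v \<bullet> ((H * ?D * mat_adjoint H) *\<^sub>v v))
       = (\<Sum>l<n. f l * (cmod (\<Sum>k<n. cnj (H $$ (k,l)) * v $ k))\<^sup>2)"
      unfolding quad_form_udu[OF H v] Re_sum cy
      by (intro sum.cong refl, simp only: of_real_mult[symmetric] Re_complex_of_real)
    also have "\<dots> \<ge> 0" using f by (intro sum_nonneg, simp)
    finally show ?thesis .
  qed
  thus ?thesis unfolding psd_mat_def using herm by blast
qed


lemma quad_cross: assumes G1: "(G1::cmat) \<in> carrier_mat n n" and G2: "(G2::cmat) \<in> carrier_mat n n"
  shows "(\<Sum>j<n. \<Sum>k<n. complex_of_real (a j * a k) *
      (G1 * mat_diag n (\<lambda>j. complex_of_real (f1 j)) * mat_adjoint G1) $$ (j,k) *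
      cnj ((G2 * mat_diag n (\<lambda>j. complex_of_real (f2 j)) * mat_adjoint G2) $$ (j,k)))
    = (\<Sum>p<n. \<Sum>q<n. complex_of_real (f1 p * f2 q) *
      (cnj (\<Sum>k<n. complex_of_real (a k) * cnj (G1 $$ (k,p)) * G2 $$ (k,q)) *
      (\<Sum>k<n. complex_of_real (a k) * cnj (G1 $$ (k,p)) * G2 $$ (k,q))))"
proof -
  let ?F = "\<lambda>p q j k. complex_of_real (a j * a k * f1 p * f2 q) * G1 $$ (j,p) * cnj (G1 $$ (k,p)) * cnj (G2 $$ (j,q)) * G2 $$ (k,q)"
  have "(\<Sum>j<n. \<Sum>k<n. complex_of_real (a j * a k) *
      (G1 * mat_diag n (\<lambda>j. complex_of_real (f1 j)) * mat_adjoint G1) $$ (j,k) *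
      cnj ((G2 * mat_diag n (\<lambda>j. complex_of_real (f2 j)) * mat_adjoint G2) $$ (j,k)))
    = (\<Sum>j<n. \<Sum>k<n. \<Sum>p<n. \<Sum>q<n. ?F p q j k)"
  proof (intro sum.cong refl)
    fix j k assume j: "j \<in> {..<n}" and k: "k \<in> {..<n}"
    show "complex_of_real (a j * a k) *
      (G1 * mat_diag n (\<lambda>j. complex_of_real (f1 j)) * mat_adjoint G1) $$ (j,k) *
      cnj ((G2 * mat_diag n (\<lambda>j. complex_of_real (f2 j)) * mat_adjoint G2) $$ (j,k))
      = (\<Sum>p<n. \<Sum>q<n. ?F p q j k)"
      using j k by (simp add: udu_index[OF G1] udu_index[OF G2] cnj_sum sum_product sum_distrib_left mult_ac)
  qed
  also have "\<dots> = (\<Sum>p<n. \<Sum>q<n. \<Sum>j<n. \<Sum>k<n. ?F p q j k)"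
    by (rule sum4_swap[symmetric])
  also have "\<dots> = (\<Sum>p<n. \<Sum>q<n. complex_of_real (f1 p * f2 q) *
      (cnj (\<Sum>k<n. complex_of_real (a k) * cnj (G1 $$ (k,p)) * G2 $$ (k,q)) *
      (\<Sum>k<n. complex_of_real (a k) * cnj (G1 $$ (k,p)) * G2 $$ (k,q))))"
    apply (intro sum.cong refl)
    apply (simp add: cnj_sum sum_product sum_distrib_left mult_ac)
    apply (subst sum.swap)
    apply (simp add: mult_ac)
    done
  finally show ?thesis .
qed

lemma quad_cross_nonneg: assumes G1: "(G1::cmat) \<in> carrier_mat n n" and G2: "(G2::cmat) \<in> carrier_mat n n"
  and f1: "\<And>j. f1 j \<ge> 0" and f2: "\<And>j. f2 j \<ge> 0"
  shows "0 \<le> Re (\<Sum>j<n. \<Sum>k<n. complex_of_real (a j * a k) *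
      (G1 * mat_diag n (\<lambda>j. complex_of_real (f1 j)) * mat_adjoint G1) $$ (j,k) *
      cnj ((G2 * mat_diag n (\<lambda>j. complex_of_real (f2 j)) * mat_adjoint G2) $$ (j,k)))"
proof -
  have cy: "\<And>y. cnj y * y = complex_of_real ((cmod y)\<^sup>2)"
    by (metis complex_norm_square mult.commute)
  show ?thesis unfolding quad_cross[OF G1 G2] Re_sum cy
    using f1 f2 by (intro sum_nonneg, simp only: of_real_mult[symmetric] Re_complex_of_real, simp)
qed


lemma ts_index[simp]: "i < d \<Longrightarrow> j < d \<Longrightarrow> tuple_sum d t P $$ (i,j) = (\<Sum>l<t. P l $$ (i,j))"
  "dim_row (tuple_sum d t P) = d" "dim_col (tuple_sum d t P) = d"
  unfolding tuple_sum_def by simp_all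

lemma ts_carrier[simp]: "tuple_sum d t P \<in> carrier_mat d d"
  unfolding tuple_sum_def by simp

lemma triple_index: assumes A: "(A::cmat) \<in> carrier_mat n n" and M: "M \<in> carrier_mat n n" and C: "C \<in> carrier_mat n n"
  and j: "j < n" and k: "k < n"
  shows "(A * M * C) $$ (j,k) = (\<Sum>a<n. \<Sum>b<n. A $$ (j,a) * M $$ (a,b) * C $$ (b,k))"
proof -
  have "(A * M * C) $$ (j,k) = (\<Sum>a<n. A $$ (j,a) * (\<Sum>b<n. M $$ (a,b) * C $$ (b,k)))"
    using A M C j k by (simp add: scalar_prod_def atLeast0LessThan)
  also have "\<dots> = (\<Sum>a<n. \<Sum>b<n. A $$ (j,a) * M $$ (a,b) * C $$ (b,k))"
    by (simp add: sum_distrib_left mult.assoc)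
  finally show ?thesis .
qed

lemma ts_conj: assumes A: "(A::cmat) \<in> carrier_mat d d" and C: "C \<in> carrier_mat d d"
  and B: "\<And>l. l < t \<Longrightarrow> B l \<in> carrier_mat d d"
  shows "tuple_sum d t (\<lambda>l. A * B l * C) = A * tuple_sum d t B * C"
proof (rule eq_matI)
  fix j k assume "j < dim_row (A * tuple_sum d t B * C)" "k < dim_col (A * tuple_sum d t B * C)"
  hence j: "j < d" and k: "k < d" using A C by auto
  have "tuple_sum d t (\<lambda>l. A * B l * C) $$ (j,k) = (\<Sum>l<t. \<Sum>a<d. \<Sum>b<d. A $$ (j,a) * B l $$ (a,b) * C $$ (b,k))"
    using j k triple_index[OF A B C j k] by simp
  also have "\<dots> = (\<Sum>a<d. \<Sum>b<d. \<Sum>l<t. A $$ (j,a) * B l $$ (a,b) * C $$ (b,k))"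
  proof -
    have "(\<Sum>l<t. \<Sum>a<d. \<Sum>b<d. A $$ (j,a) * B l $$ (a,b) * C $$ (b,k))
        = (\<Sum>a<d. \<Sum>l<t. \<Sum>b<d. A $$ (j,a) * B l $$ (a,b) * C $$ (b,k))" by (rule sum.swap)
    also have "\<dots> = (\<Sum>a<d. \<Sum>b<d. \<Sum>l<t. A $$ (j,a) * B l $$ (a,b) * C $$ (b,k))"
      by (rule sum.cong[OF refl], rule sum.swap)
    finally show ?thesis .
  qed
  also have "\<dots> = (\<Sum>a<d. \<Sum>b<d. A $$ (j,a) * tuple_sum d t B $$ (a,b) * C $$ (b,k))"
    by (intro sum.cong refl, simp add: sum_distrib_left sum_distrib_right)
  also have "\<dots> = (A * tuple_sum d t B * C) $$ (j,k)"
    using triple_index[OF A ts_carrier C j k] by simp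
  finally show "tuple_sum d t (\<lambda>l. A * B l * C) $$ (j,k) = (A * tuple_sum d t B * C) $$ (j,k)" .
qed (use A C in auto)

lemma conj_minus: assumes A: "(A::cmat) \<in> carrier_mat n n" and M1: "M1 \<in> carrier_mat n n"
  and M2: "M2 \<in> carrier_mat n n" and C: "C \<in> carrier_mat n n"
  shows "A * (M1 - M2) * C = A * M1 * C - A * M2 * C"
proof (rule eq_matI)
  fix j k assume "j < dim_row (A * M1 * C - A * M2 * C)" "k < dim_col (A * M1 * C - A * M2 * C)"
  hence j: "j < n" and k: "k < n" using A C by auto
  have Mc: "M1 - M2 \<in> carrier_mat n n" using M2 by (rule minus_carrier_mat)
  show "(A * (M1 - M2) * C) $$ (j,k) = (A * M1 * C - A * M2 * C) $$ (j,k)"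
    using triple_index[OF A Mc C j k] triple_index[OF A M1 C j k] triple_index[OF A M2 C j k] j k A C M1 M2
    by (simp add: sum_subtractf[symmetric] algebra_simps)
qed (use A C in auto)

lemma fro_diag: "fro (mat_diag n f) = (\<Sum>j<n. (cmod (f j))\<^sup>2)"
proof -
  have "fro (mat_diag n f) = (\<Sum>i<n. \<Sum>j<n. (cmod (if i = j then f j else 0))\<^sup>2)"
    unfolding fro_def mat_diag_def by simp
  also have "\<dots> = (\<Sum>i<n. \<Sum>j<n. if i = j then (cmod (f j))\<^sup>2 else 0)"
    by (intro sum.cong refl, simp)
  also have "\<dots> = (\<Sum>i<n. (cmod (f i))\<^sup>2)" by simp
  finally show ?thesis .
qed

lemma fro_minus_le: assumes A: "(A::cmat) \<in> carrier_mat n m" and B: "B \<in> carrier_mat n m"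
  shows "fro (A - B) \<le> 3/2 * fro A + 3 * fro B"
proof -
  have pt: "(cmod (a - b))\<^sup>2 \<le> 3/2 * (cmod a)\<^sup>2 + 3 * (cmod b)\<^sup>2" for a b :: complex
  proof -
    have "cmod (a - b) \<le> cmod a + cmod b" by (rule norm_triangle_ineq4)
    hence "(cmod (a - b))\<^sup>2 \<le> (cmod a + cmod b)\<^sup>2" by (intro power_mono, auto)
    also have "\<dots> \<le> 3/2 * (cmod a)\<^sup>2 + 3 * (cmod b)\<^sup>2"
    proof -
      have e: "(cmod a + cmod b)\<^sup>2 = 3/2 * (cmod a)\<^sup>2 + 3 * (cmod b)\<^sup>2 - 1/2 * (cmod a - 2 * cmod b)\<^sup>2"
        by (simp add: power2_eq_square algebra_simps)
      have "0 \<le> (cmod a - 2 * cmod b)\<^sup>2" by simp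
      thus ?thesis unfolding e by linarith
    qed
    finally show ?thesis .
  qed
  have "fro (A - B) = (\<Sum>i<n. \<Sum>j<m. (cmod (A $$ (i,j) - B $$ (i,j)))\<^sup>2)"
    unfolding fro_def using A B by simp
  also have "\<dots> \<le> (\<Sum>i<n. \<Sum>j<m. 3/2 * (cmod (A $$ (i,j)))\<^sup>2 + 3 * (cmod (B $$ (i,j)))\<^sup>2)"
    by (intro sum_mono pt)
  also have "\<dots> = 3/2 * fro A + 3 * fro B"
    unfolding fro_def using A B by (simp add: sum.distrib sum_distrib_left)
  finally show ?thesis .
qed


definition negp :: "real \<Rightarrow> real" where "negp x = (if x \<le> 0 then - x else 0)"
definition posp :: "real \<Rightarrow> real" where "posp x = (if x \<le> 0 then 0 else x)"

lemma negp_nonneg: "negp x \<ge> 0" unfolding negp_def by simp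
lemma posp_nonneg: "posp x \<ge> 0" unfolding posp_def by simp
lemma pos_neg: "x = posp x - negp x" unfolding posp_def negp_def by simp
lemma negp_zeta: "(negp x)\<^sup>2 = zeta x" unfolding negp_def zeta_def by simp

lemma mat_fun_spec: assumes "hermitian_mat d A"
  shows "\<exists>U lam. unitary_mat d U \<and> A = U * mat_diag d (\<lambda>j. complex_of_real (lam j)) * mat_adjoint U
     \<and> mat_fun d f A = U * mat_diag d (\<lambda>j. complex_of_real (f (lam j))) * mat_adjoint U"
proof -
  obtain U lam where "unitary_mat d U" "A = U * mat_diag d (\<lambda>j. complex_of_real (lam j)) * mat_adjoint U"
    using spectral_thm[OF assms] by blast
  hence ex: "\<exists>B U lam. unitary_mat d U \<and> A = U * mat_diag d (\<lambda>j. complex_of_real (lam j)) * mat_adjoint U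
       \<and> B = U * mat_diag d (\<lambda>j. complex_of_real (f (lam j))) * mat_adjoint U" by blast
  show ?thesis unfolding mat_fun_def using someI_ex[OF ex] by blast
qed

lemma udu_minus: assumes U: "(U::cmat) \<in> carrier_mat n n"
  shows "U * mat_diag n (\<lambda>j. complex_of_real (f j - g j)) * mat_adjoint U
    = U * mat_diag n (\<lambda>j. complex_of_real (f j)) * mat_adjoint U - U * mat_diag n (\<lambda>j. complex_of_real (g j)) * mat_adjoint U"
proof (rule eq_matI)
  fix i j assume "i < dim_row (U * mat_diag n (\<lambda>j. complex_of_real (f j)) * mat_adjoint U - U * mat_diag n (\<lambda>j. complex_of_real (g j)) * mat_adjoint U)"
     "j < dim_col (U * mat_diag n (\<lambda>j. complex_of_real (f j)) * mat_adjoint U - U * mat_diag n (\<lambda>j. complex_of_real (g j)) * mat_adjoint U)"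
  hence i: "i < n" and j: "j < n" using U by auto
  show "(U * mat_diag n (\<lambda>j. complex_of_real (f j - g j)) * mat_adjoint U) $$ (i,j) =
     (U * mat_diag n (\<lambda>j. complex_of_real (f j)) * mat_adjoint U - U * mat_diag n (\<lambda>j. complex_of_real (g j)) * mat_adjoint U) $$ (i,j)"
  proof -
    have mi: "(U * mat_diag n (\<lambda>j. complex_of_real (f j)) * mat_adjoint U - U * mat_diag n (\<lambda>j. complex_of_real (g j)) * mat_adjoint U) $$ (i,j)
      = (U * mat_diag n (\<lambda>j. complex_of_real (f j)) * mat_adjoint U) $$ (i,j) - (U * mat_diag n (\<lambda>j. complex_of_real (g j)) * mat_adjoint U) $$ (i,j)"
      using i j U by simp
    show ?thesis unfolding mi udu_index[OF U i j]
      by (simp add: sum_subtractf[symmetric] algebra_simps)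
  qed
qed (use U in auto)

lemma fro_udu: assumes U: "unitary_mat n U"
  shows "fro (U * mat_diag n (\<lambda>j. complex_of_real (f j)) * mat_adjoint U) = (\<Sum>j<n. (f j)\<^sup>2)"
  using fro_unitary[OF U mat_diag_dim] fro_diag by simp

lemma trace_udu: assumes U: "unitary_mat n U"
  shows "mtrace (U * mat_diag n (\<lambda>j. complex_of_real (f j)) * mat_adjoint U) = (\<Sum>j<n. complex_of_real (f j))"
  using trace_unitary[OF U mat_diag_dim] mtrace_diag by simp


lemma hh_alg: "(s::real) > 0 \<Longrightarrow> (s * a - 1 / s) * (s * b - 1 / s) = (s * s) * (a * b) - (a + b) + 1 / (s * s)"
  by (simp add: field_simps)

theorem lemma9p2:
  fixes m n t :: nat and X R :: "nat \<Rightarrow> complex mat"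
  assumes herm: "\<forall>i<t. hermitian_mat (m ^ n) (X i)"
    and sum_id: "tuple_sum (m ^ n) t X = 1\<^sub>m (m ^ n)"
    and R_subPOVM: "sub_POVM (m ^ n) t R"
    and R_argmin: "\<forall>P. sub_POVM (m ^ n) t P \<longrightarrow>
                      norm2' (m ^ n) t (\<lambda>i. X i - R i) \<le> norm2' (m ^ n) t (\<lambda>i. X i - P i)"
  shows "norm2' (m ^ n) t (\<lambda>i. R i - X i)
          \<le> 3 * (real t + 1) / real (m ^ n) * (\<Sum>i<t. Re (mtrace (mat_fun (m ^ n) zeta (X i))))
            + 6 * sqrt (real t / real (m ^ n) * (\<Sum>i<t. Re (mtrace (mat_fun (m ^ n) zeta (X i)))))"
proof -
  define d where "d = m ^ n"
  have herm: "\<And>i. i < t \<Longrightarrow> hermitian_mat d (X i)" using herm unfolding d_def by auto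
  have sum_id: "tuple_sum d t X = 1\<^sub>m d" using sum_id unfolding d_def .
  have R_subPOVM: "sub_POVM d t R" using R_subPOVM unfolding d_def .
  have R_argmin: "\<And>P. sub_POVM d t P \<Longrightarrow> norm2' d t (\<lambda>i. X i - R i) \<le> norm2' d t (\<lambda>i. X i - P i)"
    using R_argmin unfolding d_def by auto
  have Xc: "\<And>i. i < t \<Longrightarrow> X i \<in> carrier_mat d d" using herm unfolding hermitian_mat_def by auto
  have Rc: "\<And>i. i < t \<Longrightarrow> R i \<in> carrier_mat d d"
    using R_subPOVM unfolding sub_POVM_def psd_mat_def hermitian_mat_def by auto
  have norm2_fro: "\<And>Y. (\<And>i. i < t \<Longrightarrow> Y i \<in> carrier_mat d d) \<Longrightarrow> norm2' d t Y = (\<Sum>i<t. fro (Y i) / real d)"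
  proof -
    fix Y :: "nat \<Rightarrow> cmat" assume Y: "\<And>i. i < t \<Longrightarrow> Y i \<in> carrier_mat d d"
    show "norm2' d t Y = (\<Sum>i<t. fro (Y i) / real d)"
      unfolding norm2'_def by (intro sum.cong refl, simp add: fro_trace[OF Y])
  qed
  have sym: "norm2' d t (\<lambda>i. R i - X i) = norm2' d t (\<lambda>i. X i - R i)"
  proof -
    have "fro (R i - X i) = fro (X i - R i)" if i: "i < t" for i
      using Rc[OF i] Xc[OF i] unfolding fro_def by (simp add: norm_minus_commute)
    thus ?thesis using norm2_fro[of "\<lambda>i. R i - X i"] norm2_fro[of "\<lambda>i. X i - R i"] Rc Xc
      by (simp add: minus_carrier_mat)
  qed
  show ?thesis
  proof (cases "d = 0")
    case True
    have "norm2' d t (\<lambda>i. R i - X i) = 0" unfolding norm2'_def True by simp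
    thus ?thesis unfolding d_def[symmetric] True by simp
  next
    case False
    hence dpos: "d > 0" by simp
    have "\<forall>i. \<exists>Ui. \<exists>lami. i < t \<longrightarrow> (unitary_mat d Ui
       \<and> X i = Ui * mat_diag d (\<lambda>j. complex_of_real (lami j)) * mat_adjoint Ui
       \<and> mat_fun d zeta (X i) = Ui * mat_diag d (\<lambda>j. complex_of_real (zeta (lami j))) * mat_adjoint Ui)"
      using mat_fun_spec[OF herm] by blast
    then obtain U where "\<forall>i. \<exists>lami. i < t \<longrightarrow> (unitary_mat d (U i)
       \<and> X i = U i * mat_diag d (\<lambda>j. complex_of_real (lami j)) * mat_adjoint (U i)
       \<and> mat_fun d zeta (X i) = U i * mat_diag d (\<lambda>j. complex_of_real (zeta (lami j))) * mat_adjoint (U i))"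
      by (rule choice[THEN exE])
    then obtain lam where Ulam: "\<And>i. i < t \<Longrightarrow> unitary_mat d (U i)
       \<and> X i = U i * mat_diag d (\<lambda>j. complex_of_real (lam i j)) * mat_adjoint (U i)
       \<and> mat_fun d zeta (X i) = U i * mat_diag d (\<lambda>j. complex_of_real (zeta (lam i j))) * mat_adjoint (U i)"
      by (rule choice[THEN exE]) blast
    have Uu: "\<And>i. i < t \<Longrightarrow> unitary_mat d (U i)" using Ulam by blast
    have XU: "\<And>i. i < t \<Longrightarrow> X i = U i * mat_diag d (\<lambda>j. complex_of_real (lam i j)) * mat_adjoint (U i)"
      using Ulam by blast
    have FU: "\<And>i. i < t \<Longrightarrow> mat_fun d zeta (X i) = U i * mat_diag d (\<lambda>j. complex_of_real (zeta (lam i j))) * mat_adjoint (U i)"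
      using Ulam by blast
    have Uc: "\<And>i. i < t \<Longrightarrow> U i \<in> carrier_mat d d" using Uu unfolding unitary_mat_def by blast
    define z where "z = (\<lambda>i. \<Sum>j<d. zeta (lam i j))"
    define s where "s = (\<Sum>i<t. z i)"
    have trz: "\<And>i. i < t \<Longrightarrow> Re (mtrace (mat_fun d zeta (X i))) = z i"
      unfolding z_def using FU trace_udu[OF Uu] by (simp add: Re_sum)
    have z_nonneg: "\<And>i. z i \<ge> 0" unfolding z_def zeta_def by (intro sum_nonneg, simp)
    have s_nonneg: "s \<ge> 0" unfolding s_def using z_nonneg by (intro sum_nonneg, simp)
    have s_eq: "(\<Sum>i<t. Re (mtrace (mat_fun d zeta (X i)))) = s" unfolding s_def using trz by simp
    define Nm where "Nm = (\<lambda>i. U i * mat_diag d (\<lambda>j. complex_of_real (negp (lam i j))) * mat_adjoint (U i))"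
    define Ym where "Ym = (\<lambda>i. U i * mat_diag d (\<lambda>j. complex_of_real (posp (lam i j))) * mat_adjoint (U i))"
    have Nmc: "\<And>i. i < t \<Longrightarrow> Nm i \<in> carrier_mat d d" unfolding Nm_def using Uc by simp
    have Ymc: "\<And>i. i < t \<Longrightarrow> Ym i \<in> carrier_mat d d" unfolding Ym_def using Uc by simp
    have XYN: "\<And>i. i < t \<Longrightarrow> X i = Ym i - Nm i"
    proof -
      fix i assume i: "i < t"
      have "X i = U i * mat_diag d (\<lambda>j. complex_of_real (posp (lam i j) - negp (lam i j))) * mat_adjoint (U i)"
        using XU[OF i] pos_neg by simp
      thus "X i = Ym i - Nm i" unfolding Ym_def Nm_def using udu_minus[OF Uc[OF i]] by simp
    qed
    have froN: "\<And>i. i < t \<Longrightarrow> fro (Nm i) = z i"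
      unfolding Nm_def z_def using fro_udu[OF Uu] negp_zeta by simp
    have Nm_psd: "\<And>i. i < t \<Longrightarrow> psd_mat d (Nm i)" unfolding Nm_def using psd_udu[OF Uc negp_nonneg] by simp
    have Nm_adj: "\<And>i. i < t \<Longrightarrow> mat_adjoint (Nm i) = Nm i" using Nm_psd unfolding psd_mat_def hermitian_mat_def by blast
    define Nt where "Nt = tuple_sum d t Nm"
    have Ntc: "Nt \<in> carrier_mat d d" unfolding Nt_def by simp
    have Nt_herm: "hermitian_mat d Nt"
    proof -
      have "mat_adjoint Nt = Nt"
      proof (rule eq_matI)
        fix j k assume "j < dim_row Nt" "k < dim_col Nt"
        hence j: "j < d" and k: "k < d" using Ntc by auto
        have "mat_adjoint Nt $$ (j,k) = (\<Sum>i<t. cnj (Nm i $$ (k,j)))" using j k Ntc unfolding Nt_def by (simp add: cnj_sum)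
        also have "\<dots> = (\<Sum>i<t. mat_adjoint (Nm i) $$ (j,k))"
        proof (intro sum.cong refl)
          fix i assume "i \<in> {..<t}"
          hence "dim_row (Nm i) = d" "dim_col (Nm i) = d" using Nmc by auto
          thus "cnj (Nm i $$ (k,j)) = mat_adjoint (Nm i) $$ (j,k)" using j k by simp
        qed
        also have "\<dots> = Nt $$ (j,k)" using j k Nm_adj unfolding Nt_def by simp
        finally show "mat_adjoint Nt $$ (j,k) = Nt $$ (j,k)" .
      qed (use Ntc in auto)
      thus ?thesis unfolding hermitian_mat_def using Ntc by simp
    qed
    obtain V mu where Vu: "unitary_mat d V" and NV: "Nt = V * mat_diag d (\<lambda>j. complex_of_real (mu j)) * mat_adjoint V"
      using spectral_thm[OF Nt_herm] by blast
    have Vc: "V \<in> carrier_mat d d" and v1: "V * mat_adjoint V = 1\<^sub>m d" and v2: "mat_adjoint V * V = 1\<^sub>m d"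
      using Vu unfolding unitary_mat_def by auto
    have Va: "mat_adjoint V \<in> carrier_mat d d" using Vc by simp
    define G where "G = (\<lambda>i. mat_adjoint V * U i)"
    have Gc: "\<And>i. i < t \<Longrightarrow> G i \<in> carrier_mat d d" unfolding G_def using Uc Va by simp
    define Wm where "Wm = (\<lambda>i. G i * mat_diag d (\<lambda>j. complex_of_real (posp (lam i j))) * mat_adjoint (G i))"
    have Wmc: "\<And>i. i < t \<Longrightarrow> Wm i \<in> carrier_mat d d" unfolding Wm_def using Gc by simp
    have Wm_eq: "\<And>i. i < t \<Longrightarrow> mat_adjoint V * Ym i * V = Wm i"
      unfolding Wm_def Ym_def G_def using conj_udu[OF Vc Uc] by simp
    have NmV: "\<And>i. i < t \<Longrightarrow> mat_adjoint V * Nm i * V = G i * mat_diag d (\<lambda>j. complex_of_real (negp (lam i j))) * mat_adjoint (G i)"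
      unfolding Nm_def G_def using conj_udu[OF Vc Uc] by simp
    have diagmu: "mat_adjoint V * Nt * V = mat_diag d (\<lambda>j. complex_of_real (mu j))"
      unfolding NV using assoc5[OF Va Vc mat_diag_dim Va Vc] v2 by simp
    have mu_nonneg: "\<And>j. j < d \<Longrightarrow> mu j \<ge> 0"
    proof -
      fix j assume j: "j < d"
      have "complex_of_real (mu j) = (mat_adjoint V * Nt * V) $$ (j,j)" unfolding diagmu using j by (simp add: mat_diag_def)
      also have "\<dots> = tuple_sum d t (\<lambda>i. mat_adjoint V * Nm i * V) $$ (j,j)"
        unfolding Nt_def using ts_conj[OF Va Vc Nmc] by simp
      also have "\<dots> = (\<Sum>i<t. \<Sum>l<d. complex_of_real (negp (lam i l) * (cmod (G i $$ (j,l)))\<^sup>2))"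
      proof -
        have "tuple_sum d t (\<lambda>i. mat_adjoint V * Nm i * V) $$ (j,j) = (\<Sum>i<t. \<Sum>l<d. G i $$ (j,l) * (complex_of_real (negp (lam i l)) * cnj (G i $$ (j,l))))"
          using j NmV udu_index[OF Gc] by (simp add: mult.assoc)
        also have "\<dots> = (\<Sum>i<t. \<Sum>l<d. complex_of_real (negp (lam i l) * (cmod (G i $$ (j,l)))\<^sup>2))"
          by (intro sum.cong refl) (metis mult_cnj_cmod(1) mult.left_commute of_real_mult)
        finally show ?thesis .
      qed
      finally have "mu j = (\<Sum>i<t. \<Sum>l<d. negp (lam i l) * (cmod (G i $$ (j,l)))\<^sup>2)"
        by (simp only: of_real_sum[symmetric] of_real_eq_iff)
      also have "\<dots> \<ge> 0" using negp_nonneg by (intro sum_nonneg mult_nonneg_nonneg, auto)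
      finally show "mu j \<ge> 0" .
    qed
    define sg where "sg = (\<lambda>j. 1 + mu j)"
    define tau where "tau = (\<lambda>j. 1 / sqrt (sg j))"
    define Dt where "Dt = mat_diag d (\<lambda>j. complex_of_real (tau j))"
    have Dtc: "Dt \<in> carrier_mat d d" unfolding Dt_def by simp
    define H where "H = (\<lambda>i. V * Dt * mat_adjoint V * U i)"
    have Hc: "\<And>i. i < t \<Longrightarrow> H i \<in> carrier_mat d d" unfolding H_def using Vc Dtc Va Uc by simp
    define P where "P = (\<lambda>i. H i * mat_diag d (\<lambda>j. complex_of_real (posp (lam i j))) * mat_adjoint (H i))"
    have Pc: "\<And>i. i < t \<Longrightarrow> P i \<in> carrier_mat d d" unfolding P_def using Hc by simp
    have P_psd: "\<And>i. i < t \<Longrightarrow> psd_mat d (P i)" unfolding P_def using psd_udu[OF Hc posp_nonneg] by simp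
    have VH: "\<And>i. i < t \<Longrightarrow> mat_adjoint V * H i = Dt * G i"
    proof -
      fix i assume i: "i < t"
      have "mat_adjoint V * H i = (mat_adjoint V * V) * Dt * (mat_adjoint V * U i)"
        unfolding H_def using Va Vc Dtc Uc[OF i] by (simp add: assoc_mult_mat[of _ d d _ d _ d])
      thus "mat_adjoint V * H i = Dt * G i" unfolding G_def using v2 Dtc by simp
    qed
    have PV: "\<And>i j k. i < t \<Longrightarrow> j < d \<Longrightarrow> k < d \<Longrightarrow>
        (mat_adjoint V * P i * V) $$ (j,k) = complex_of_real (tau j * tau k) * Wm i $$ (j,k)"
    proof -
      fix i j k assume i: "i < t" and j: "j < d" and k: "k < d"
      have DG: "Dt * G i = Matrix.mat d d (\<lambda>(j,l). complex_of_real (tau j) * G i $$ (j,l))"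
        unfolding Dt_def by (rule mat_diag_mult_left[OF Gc[OF i]])
      have DGc: "Dt * G i \<in> carrier_mat d d" using Dtc Gc[OF i] by simp
      have "mat_adjoint V * P i * V = (Dt * G i) * mat_diag d (\<lambda>j. complex_of_real (posp (lam i j))) * mat_adjoint (Dt * G i)"
        unfolding P_def using conj_udu[OF Vc Hc[OF i]] VH[OF i] by simp
      hence "(mat_adjoint V * P i * V) $$ (j,k) = (\<Sum>l<d. (Dt * G i) $$ (j,l) * complex_of_real (posp (lam i l)) * cnj ((Dt * G i) $$ (k,l)))"
        using udu_index[OF DGc j k] by simp
      also have "\<dots> = (\<Sum>l<d. complex_of_real (tau j * tau k) * (G i $$ (j,l) * complex_of_real (posp (lam i l)) * cnj (G i $$ (k,l))))"
        unfolding DG using j k by (intro sum.cong refl, simp add: mult_ac)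
      also have "\<dots> = complex_of_real (tau j * tau k) * Wm i $$ (j,k)"
        unfolding Wm_def using udu_index[OF Gc[OF i] j k] by (simp add: sum_distrib_left)
      finally show "(mat_adjoint V * P i * V) $$ (j,k) = complex_of_real (tau j * tau k) * Wm i $$ (j,k)" .
    qed
    have sumY: "tuple_sum d t Ym = 1\<^sub>m d + Nt"
    proof (rule eq_matI)
      fix j k assume "j < dim_row (1\<^sub>m d + Nt)" "k < dim_col (1\<^sub>m d + Nt)"
      hence j: "j < d" and k: "k < d" using Ntc by auto
      have "tuple_sum d t Ym $$ (j,k) = (\<Sum>i<t. Ym i $$ (j,k))" using j k by simp
      also have "\<dots> = (\<Sum>i<t. X i $$ (j,k) + Nm i $$ (j,k))"
      proof (intro sum.cong refl)
        fix i assume "i \<in> {..<t}"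
        hence i: "i < t" by simp
        have "X i $$ (j,k) = Ym i $$ (j,k) - Nm i $$ (j,k)" using XYN[OF i] j k Nmc[OF i] by simp
        thus "Ym i $$ (j,k) = X i $$ (j,k) + Nm i $$ (j,k)" by simp
      qed
      also have "\<dots> = tuple_sum d t X $$ (j,k) + Nt $$ (j,k)"
        unfolding Nt_def using j k by (simp add: sum.distrib)
      also have "\<dots> = (1\<^sub>m d + Nt) $$ (j,k)" using sum_id j k Ntc by simp
      finally show "tuple_sum d t Ym $$ (j,k) = (1\<^sub>m d + Nt) $$ (j,k)" .
    qed (use Ntc in auto)
    have sumW: "\<And>j k. j < d \<Longrightarrow> k < d \<Longrightarrow> (\<Sum>i<t. Wm i $$ (j,k)) = (if j = k then complex_of_real (sg j) else 0)"
    proof -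
      fix j k assume j: "j < d" and k: "k < d"
      have "(\<Sum>i<t. Wm i $$ (j,k)) = tuple_sum d t (\<lambda>i. mat_adjoint V * Ym i * V) $$ (j,k)"
        using j k Wm_eq by simp
      also have "\<dots> = (mat_adjoint V * (1\<^sub>m d + Nt) * V) $$ (j,k)"
        using ts_conj[OF Va Vc Ymc] sumY by simp
      also have "mat_adjoint V * (1\<^sub>m d + Nt) * V = mat_adjoint V * V + mat_adjoint V * Nt * V"
      proof -
        have "mat_adjoint V * (1\<^sub>m d + Nt) = mat_adjoint V * 1\<^sub>m d + mat_adjoint V * Nt"
          by (rule mult_add_distrib_mat[OF Va one_carrier_mat Ntc])
        also have "\<dots> = mat_adjoint V + mat_adjoint V * Nt" using right_mult_one_mat[OF Va] by simp
        finally have e: "mat_adjoint V * (1\<^sub>m d + Nt) = mat_adjoint V + mat_adjoint V * Nt" .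
        show ?thesis unfolding e by (rule add_mult_distrib_mat[OF Va mult_carrier_sq[OF Va Ntc] Vc])
      qed
      also have "\<dots> = 1\<^sub>m d + mat_diag d (\<lambda>j. complex_of_real (mu j))" using v2 diagmu by simp
      also have "\<dots> $$ (j,k) = (if j = k then complex_of_real (sg j) else 0)"
        using j k unfolding sg_def mat_diag_def by simp
      finally show "(\<Sum>i<t. Wm i $$ (j,k)) = (if j = k then complex_of_real (sg j) else 0)" .
    qed
    have sg_pos: "\<And>j. j < d \<Longrightarrow> sg j \<ge> 1" unfolding sg_def using mu_nonneg by simp
    have tau_sg: "\<And>j. j < d \<Longrightarrow> tau j * tau j * sg j = 1"
    proof -
      fix j assume j: "j < d"
      have "sqrt (sg j) * sqrt (sg j) = sg j" using sg_pos[OF j] by simp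
      thus "tau j * tau j * sg j = 1" unfolding tau_def using sg_pos[OF j] by (simp add: field_simps)
    qed
    have TP: "tuple_sum d t P = 1\<^sub>m d"
    proof -
      have "mat_adjoint V * tuple_sum d t P * V = 1\<^sub>m d"
      proof (rule eq_matI)
        fix j k assume "j < dim_row (1\<^sub>m d :: cmat)" "k < dim_col (1\<^sub>m d :: cmat)"
        hence j: "j < d" and k: "k < d" by auto
        have "(mat_adjoint V * tuple_sum d t P * V) $$ (j,k) = tuple_sum d t (\<lambda>i. mat_adjoint V * P i * V) $$ (j,k)"
          using ts_conj[OF Va Vc Pc] by simp
        also have "\<dots> = (\<Sum>i<t. complex_of_real (tau j * tau k) * Wm i $$ (j,k))"
          using j k PV by simp
        also have "\<dots> = complex_of_real (tau j * tau k) * (if j = k then complex_of_real (sg j) else 0)"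
          using sumW[OF j k] by (simp add: sum_distrib_left[symmetric])
        also have "\<dots> = 1\<^sub>m d $$ (j,k)" using j k tau_sg[OF j]
          by (cases "j = k") (simp_all flip: of_real_mult)
        finally show "(mat_adjoint V * tuple_sum d t P * V) $$ (j,k) = 1\<^sub>m d $$ (j,k)" .
      qed (use Va Vc in auto)
      hence "V * (mat_adjoint V * tuple_sum d t P * V) * mat_adjoint V = V * 1\<^sub>m d * mat_adjoint V" by simp
      thus ?thesis using unitary_conj_back[OF Vu ts_carrier] v1 Vc by simp
    qed
    have subP: "sub_POVM d t P"
    proof -
      have "1\<^sub>m d - tuple_sum d t P = 1\<^sub>m d * mat_diag d (\<lambda>j. complex_of_real 0) * mat_adjoint (1\<^sub>m d)"
        unfolding TP by (rule eq_matI, auto simp: mat_diag_def)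
      hence "psd_mat d (1\<^sub>m d - tuple_sum d t P)"
        using psd_udu[of "1\<^sub>m d" d "\<lambda>_. 0"] by simp
      thus ?thesis unfolding sub_POVM_def using P_psd by blast
    qed
    have tau_pos: "\<And>j. j < d \<Longrightarrow> tau j > 0"
    proof -
      fix j assume j: "j < d" thus "tau j > 0" unfolding tau_def using sg_pos[OF j] by simp
    qed
    have tau_le1: "\<And>j. j < d \<Longrightarrow> tau j \<le> 1"
    proof -
      fix j assume j: "j < d" thus "tau j \<le> 1" unfolding tau_def using sg_pos[OF j] by simp
    qed
    define g where "g = (\<lambda>j. 1 - tau j)"
    have g_nonneg: "\<And>j. j < d \<Longrightarrow> g j \<ge> 0" unfolding g_def using tau_le1 by simp
    have froYP: "\<And>i. i < t \<Longrightarrow> fro (Ym i - P i) = (\<Sum>j<d. \<Sum>k<d. (1 - tau j * tau k)\<^sup>2 * (cmod (Wm i $$ (j,k)))\<^sup>2)"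
    proof -
      fix i assume i: "i < t"
      have YPc: "Ym i - P i \<in> carrier_mat d d" using Pc[OF i] by (rule minus_carrier_mat)
      have "fro (Ym i - P i) = fro (mat_adjoint V * (Ym i - P i) * V)" using fro_unitary2[OF Vu YPc] by simp
      also have "mat_adjoint V * (Ym i - P i) * V = mat_adjoint V * Ym i * V - mat_adjoint V * P i * V"
        by (rule conj_minus[OF Va Ymc[OF i] Pc[OF i] Vc])
      also have "fro \<dots> = (\<Sum>j<d. \<Sum>k<d. (cmod ((mat_adjoint V * Ym i * V - mat_adjoint V * P i * V) $$ (j,k)))\<^sup>2)"
        unfolding fro_def using Va Vc by simp
      also have "\<dots> = (\<Sum>j<d. \<Sum>k<d. (1 - tau j * tau k)\<^sup>2 * (cmod (Wm i $$ (j,k)))\<^sup>2)"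
      proof (intro sum.cong refl)
        fix j k assume "j \<in> {..<d}" "k \<in> {..<d}"
        hence j: "j < d" and k: "k < d" by auto
        have "(mat_adjoint V * Ym i * V - mat_adjoint V * P i * V) $$ (j,k) = complex_of_real (1 - tau j * tau k) * Wm i $$ (j,k)"
          using j k Va Vc Wm_eq[OF i] PV[OF i j k] by (simp add: algebra_simps)
        thus "(cmod ((mat_adjoint V * Ym i * V - mat_adjoint V * P i * V) $$ (j,k)))\<^sup>2 = (1 - tau j * tau k)\<^sup>2 * (cmod (Wm i $$ (j,k)))\<^sup>2"
          by (simp only: norm_mult norm_of_real power_mult_distrib power2_abs)
      qed
      finally show "fro (Ym i - P i) = (\<Sum>j<d. \<Sum>k<d. (1 - tau j * tau k)\<^sup>2 * (cmod (Wm i $$ (j,k)))\<^sup>2)" .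
    qed
    define Bf where "Bf = (\<lambda>a b. \<Sum>i<t. \<Sum>j<d. \<Sum>k<d. a j * b k * (cmod (Wm i $$ (j,k)))\<^sup>2)"
    define cc where "cc = (\<lambda>a i l. \<Sum>j<d. \<Sum>k<d. complex_of_real (a j * a k) * Wm i $$ (j,k) * cnj (Wm l $$ (j,k)))"
    have cc_nonneg: "\<And>a i l. i < t \<Longrightarrow> l < t \<Longrightarrow> 0 \<le> Re (cc a i l)"
      unfolding cc_def Wm_def using quad_cross_nonneg[OF Gc Gc posp_nonneg posp_nonneg] by blast
    have cc_diag: "\<And>a i. Re (cc a i i) = (\<Sum>j<d. \<Sum>k<d. a j * a k * (cmod (Wm i $$ (j,k)))\<^sup>2)"
      unfolding cc_def Re_sum by (intro sum.cong refl, simp add: mult.assoc mult_cnj_cmod flip: of_real_mult)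
    have Bf_cc: "\<And>a. Bf a a = (\<Sum>i<t. Re (cc a i i))" unfolding Bf_def cc_diag ..
    have Bf_nonneg: "\<And>a. Bf a a \<ge> 0" unfolding Bf_cc using cc_nonneg by (intro sum_nonneg, simp)
    have Bquad: "\<And>a. Bf a a \<le> (\<Sum>j<d. (a j)\<^sup>2 * (sg j)\<^sup>2)"
    proof -
      fix a
      have "(\<Sum>i<t. \<Sum>l<t. cc a i l) = (\<Sum>i<t. \<Sum>l<t. \<Sum>j<d. \<Sum>k<d. complex_of_real (a j * a k) * Wm i $$ (j,k) * cnj (Wm l $$ (j,k)))"
        unfolding cc_def ..
      also have "\<dots> = (\<Sum>j<d. \<Sum>k<d. \<Sum>i<t. \<Sum>l<t. complex_of_real (a j * a k) * Wm i $$ (j,k) * cnj (Wm l $$ (j,k)))"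
        by (rule sum4_swap)
      also have "\<dots> = (\<Sum>j<d. \<Sum>k<d. complex_of_real (a j * a k) * (\<Sum>i<t. \<Sum>l<t. Wm i $$ (j,k) * cnj (Wm l $$ (j,k))))"
        by (intro sum.cong refl, simp only: sum_distrib_left mult.assoc)
      also have "\<dots> = (\<Sum>j<d. \<Sum>k<d. complex_of_real (a j * a k) * (\<Sum>i<t. Wm i $$ (j,k)) * cnj (\<Sum>l<t. Wm l $$ (j,k)))"
        by (simp only: cnj_sum sum_product mult.assoc)
      also have "\<dots> = (\<Sum>j<d. \<Sum>k<d. if j = k then complex_of_real ((a j)\<^sup>2 * (sg j)\<^sup>2) else 0)"
        by (intro sum.cong refl, simp add: sumW power2_eq_square)
      also have "\<dots> = complex_of_real (\<Sum>j<d. (a j)\<^sup>2 * (sg j)\<^sup>2)" by simp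
      finally have tot: "Re (\<Sum>i<t. \<Sum>l<t. cc a i l) = (\<Sum>j<d. (a j)\<^sup>2 * (sg j)\<^sup>2)" by simp
      have "Bf a a = (\<Sum>i<t. Re (cc a i i))" by (rule Bf_cc)
      also have "\<dots> \<le> (\<Sum>i<t. \<Sum>l<t. Re (cc a i l))"
      proof (rule sum_mono)
        fix i assume "i \<in> {..<t}"
        thus "Re (cc a i i) \<le> (\<Sum>l<t. Re (cc a i l))"
          using cc_nonneg by (intro member_le_sum, auto)
      qed
      also have "\<dots> = (\<Sum>j<d. (a j)\<^sup>2 * (sg j)\<^sup>2)" using tot by (simp add: Re_sum)
      finally show "Bf a a \<le> (\<Sum>j<d. (a j)\<^sup>2 * (sg j)\<^sup>2)" .
    qed
    define S where "S = (\<Sum>i<t. \<Sum>j<d. \<Sum>k<d. (g j + g k) * (cmod (Wm i $$ (j,k)))\<^sup>2)"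
    have S_le: "\<And>x. x > 0 \<Longrightarrow> S \<le> x * Bf g g + Bf (\<lambda>_. 1) (\<lambda>_. 1) / x"
    proof -
      fix x :: real assume x: "x > 0"
      define h where "h = (\<lambda>j. sqrt x * g j - 1 / sqrt x)"
      have sx: "sqrt x * sqrt x = x" using x by simp
      have spos: "sqrt x > 0" using x by simp
      have hh: "\<And>j k. h j * h k = x * (g j * g k) - (g j + g k) + 1 / x"
      proof -
        fix j k
        have "h j * h k = (sqrt x * sqrt x) * (g j * g k) - (g j + g k) + 1 / (sqrt x * sqrt x)"
          unfolding h_def by (rule hh_alg[OF spos])
        thus "h j * h k = x * (g j * g k) - (g j + g k) + 1 / x" unfolding sx .
      qed
      have "Bf h h = x * Bf g g - S + Bf (\<lambda>_. 1) (\<lambda>_. 1) / x"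
        unfolding Bf_def S_def hh
        by (simp add: algebra_simps sum.distrib sum_subtractf sum_distrib_left sum_divide_distrib)
      thus "S \<le> x * Bf g g + Bf (\<lambda>_. 1) (\<lambda>_. 1) / x" using Bf_nonneg[of h] by simp
    qed
    define nu2 where "nu2 = (\<Sum>j<d. (mu j)\<^sup>2)"
    define nu where "nu = sqrt nu2"
    have nu2_nonneg: "nu2 \<ge> 0" unfolding nu2_def by (intro sum_nonneg, simp)
    have nu_nonneg: "nu \<ge> 0" unfolding nu_def using nu2_nonneg by simp
    have nu_sq: "nu * nu = nu2" unfolding nu_def using nu2_nonneg by simp
    have Bgg: "Bf g g \<le> nu2"
    proof -
      have "Bf g g \<le> (\<Sum>j<d. (g j)\<^sup>2 * (sg j)\<^sup>2)" by (rule Bquad)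
      also have "\<dots> \<le> nu2" unfolding nu2_def
      proof (rule sum_mono)
        fix j assume "j \<in> {..<d}"
        hence j: "j < d" by simp
        have sq: "sqrt (sg j) \<ge> 1" using sg_pos[OF j] by simp
        have "g j * sg j = sg j - sqrt (sg j)"
          unfolding g_def tau_def using sg_pos[OF j] by (simp add: field_simps real_sqrt_divide)
        also have "\<dots> \<le> mu j" unfolding sg_def using sq unfolding sg_def by simp
        finally have le: "g j * sg j \<le> mu j" .
        have "0 \<le> g j * sg j" using g_nonneg[OF j] sg_pos[OF j] by simp
        hence "(g j * sg j)\<^sup>2 \<le> (mu j)\<^sup>2" using le by (intro power_mono, auto)
        thus "(g j)\<^sup>2 * (sg j)\<^sup>2 \<le> (mu j)\<^sup>2" by (simp add: power_mult_distrib)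
      qed
      finally show ?thesis .
    qed
    have summu: "(\<Sum>j<d. mu j) \<le> sqrt (real d) * nu"
    proof -
      have "(\<Sum>j<d. mu j)\<^sup>2 \<le> nu2 * real d"
        unfolding nu2_def using sum_squared_le_sum_of_squares[of mu "{..<d}"] by simp
      hence "sqrt ((\<Sum>j<d. mu j)\<^sup>2) \<le> sqrt (nu2 * real d)" by (rule real_sqrt_le_mono)
      moreover have "(\<Sum>j<d. mu j) \<ge> 0" using mu_nonneg by (intro sum_nonneg, simp)
      ultimately show ?thesis unfolding nu_def by (simp add: real_sqrt_mult mult.commute)
    qed
    have B11: "Bf (\<lambda>_. 1) (\<lambda>_. 1) \<le> (sqrt (real d) + nu)\<^sup>2"
    proof -
      have "Bf (\<lambda>_. 1) (\<lambda>_. 1) \<le> (\<Sum>j<d. 1\<^sup>2 * (sg j)\<^sup>2)" by (rule Bquad)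
      also have "\<dots> = real d + 2 * (\<Sum>j<d. mu j) + nu2"
        unfolding sg_def nu2_def by (simp add: power2_eq_square algebra_simps sum.distrib sum_distrib_left)
      also have "\<dots> \<le> real d + 2 * (sqrt (real d) * nu) + nu2" using summu by simp
      also have "\<dots> = (sqrt (real d) + nu)\<^sup>2" using nu_sq by (simp add: power2_eq_square algebra_simps)
      finally show ?thesis .
    qed
    have YPsum: "(\<Sum>i<t. fro (Ym i - P i)) \<le> 2 * nu * (sqrt (real d) + nu)"
    proof -
      have "(\<Sum>i<t. fro (Ym i - P i)) \<le> S"
      proof -
        have "(\<Sum>i<t. fro (Ym i - P i)) = (\<Sum>i<t. \<Sum>j<d. \<Sum>k<d. (1 - tau j * tau k)\<^sup>2 * (cmod (Wm i $$ (j,k)))\<^sup>2)"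
          using froYP by simp
        also have "\<dots> \<le> (\<Sum>i<t. \<Sum>j<d. \<Sum>k<d. (g j + g k) * (cmod (Wm i $$ (j,k)))\<^sup>2)"
        proof (intro sum_mono mult_right_mono)
          fix i j k assume "i \<in> {..<t}" "j \<in> {..<d}" "k \<in> {..<d}"
          hence j: "j < d" and k: "k < d" by auto
          have a: "0 \<le> tau j * tau k" "tau j * tau k \<le> 1"
            using tau_pos[OF j] tau_pos[OF k] tau_le1[OF j] tau_le1[OF k] by (simp_all add: mult_le_one)
          have "(1 - tau j * tau k)\<^sup>2 \<le> 1 - tau j * tau k"
            using a unfolding power2_eq_square by (intro mult_left_le_one_le, auto)
          also have "\<dots> \<le> g j + g k" unfolding g_def
            using mult_nonneg_nonneg[of "1 - tau j" "1 - tau k"] tau_le1[OF j] tau_le1[OF k]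
            by (simp add: algebra_simps)
          finally show "(1 - tau j * tau k)\<^sup>2 \<le> g j + g k" .
        qed simp
        finally show ?thesis unfolding S_def .
      qed
      show ?thesis
      proof (cases "nu = 0")
        case True
        hence "nu2 = 0" using nu_sq by simp
        hence mu0: "\<And>j. j < d \<Longrightarrow> mu j = 0" unfolding nu2_def by (simp add: sum_nonneg_eq_0_iff)
        have "\<And>j. j < d \<Longrightarrow> g j = 0" unfolding g_def tau_def sg_def using mu0 by simp
        hence "S = 0" unfolding S_def by simp
        thus ?thesis using \<open>(\<Sum>i<t. fro (Ym i - P i)) \<le> S\<close> True by simp
      next
        case False
        hence nupos: "nu > 0" using nu_nonneg by simp
        define x where "x = (sqrt (real d) + nu) / nu"
        have xpos: "x > 0" unfolding x_def using nupos by (simp add: add_nonneg_pos)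
        have "S \<le> x * Bf g g + Bf (\<lambda>_. 1) (\<lambda>_. 1) / x" by (rule S_le[OF xpos])
        also have "\<dots> \<le> x * nu2 + (sqrt (real d) + nu)\<^sup>2 / x"
          using Bgg B11 xpos by (intro add_mono mult_left_mono divide_right_mono, auto)
        also have "\<dots> = 2 * nu * (sqrt (real d) + nu)"
        proof -
          have apos: "sqrt (real d) + nu > 0" using nupos by (simp add: add_nonneg_pos)
          have e1: "x * nu2 = (sqrt (real d) + nu) * nu" unfolding x_def nu_sq[symmetric] using nupos by simp
          have e2: "(sqrt (real d) + nu)\<^sup>2 / x = (sqrt (real d) + nu) * nu"
            unfolding x_def using nupos apos by (simp add: power2_eq_square)
          show ?thesis unfolding e1 e2 by simp
        qed
        finally show ?thesis using \<open>(\<Sum>i<t. fro (Ym i - P i)) \<le> S\<close> by simp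
      qed
    qed
    have nu2_le: "nu2 \<le> real t * s"
    proof -
      have "nu2 = fro (mat_diag d (\<lambda>j. complex_of_real (mu j)))" unfolding fro_diag nu2_def by simp
      also have "\<dots> = fro Nt" unfolding diagmu[symmetric] using fro_unitary2[OF Vu Ntc] .
      also have "\<dots> = (\<Sum>j<d. \<Sum>k<d. (cmod (\<Sum>i<t. Nm i $$ (j,k)))\<^sup>2)"
        unfolding fro_def Nt_def by simp
      also have "\<dots> \<le> (\<Sum>j<d. \<Sum>k<d. real t * (\<Sum>i<t. (cmod (Nm i $$ (j,k)))\<^sup>2))"
      proof (intro sum_mono)
        fix j k
        have "cmod (\<Sum>i<t. Nm i $$ (j,k)) \<le> (\<Sum>i<t. cmod (Nm i $$ (j,k)))" by (rule norm_sum)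
        hence "(cmod (\<Sum>i<t. Nm i $$ (j,k)))\<^sup>2 \<le> (\<Sum>i<t. cmod (Nm i $$ (j,k)))\<^sup>2"
          by (intro power_mono, auto)
        also have "\<dots> \<le> (\<Sum>i<t. (cmod (Nm i $$ (j,k)))\<^sup>2) * real t"
          using sum_squared_le_sum_of_squares[of "\<lambda>i. cmod (Nm i $$ (j,k))" "{..<t}"] by simp
        finally show "(cmod (\<Sum>i<t. Nm i $$ (j,k)))\<^sup>2 \<le> real t * (\<Sum>i<t. (cmod (Nm i $$ (j,k)))\<^sup>2)"
          by (simp add: mult.commute)
      qed
      also have "\<dots> = real t * (\<Sum>i<t. fro (Nm i))"
      proof -
        have "(\<Sum>j<d. \<Sum>k<d. real t * (\<Sum>i<t. (cmod (Nm i $$ (j,k)))\<^sup>2))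
            = real t * (\<Sum>j<d. \<Sum>k<d. \<Sum>i<t. (cmod (Nm i $$ (j,k)))\<^sup>2)"
          by (simp add: sum_distrib_left)
        also have "(\<Sum>j<d. \<Sum>k<d. \<Sum>i<t. (cmod (Nm i $$ (j,k)))\<^sup>2) = (\<Sum>i<t. \<Sum>j<d. \<Sum>k<d. (cmod (Nm i $$ (j,k)))\<^sup>2)"
        proof -
          have "(\<Sum>j<d. \<Sum>k<d. \<Sum>i<t. (cmod (Nm i $$ (j,k)))\<^sup>2) = (\<Sum>j<d. \<Sum>i<t. \<Sum>k<d. (cmod (Nm i $$ (j,k)))\<^sup>2)"
            by (rule sum.cong[OF refl], rule sum.swap)
          also have "\<dots> = (\<Sum>i<t. \<Sum>j<d. \<Sum>k<d. (cmod (Nm i $$ (j,k)))\<^sup>2)" by (rule sum.swap)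
          finally show ?thesis .
        qed
        also have "\<dots> = (\<Sum>i<t. fro (Nm i))"
        proof (rule sum.cong[OF refl])
          fix i assume "i \<in> {..<t}"
          hence "Nm i \<in> carrier_mat d d" using Nmc by simp
          thus "(\<Sum>j<d. \<Sum>k<d. (cmod (Nm i $$ (j,k)))\<^sup>2) = fro (Nm i)" unfolding fro_def by simp
        qed
        finally show ?thesis .
      qed
      also have "\<dots> = real t * s" unfolding s_def using froN by simp
      finally show ?thesis .
    qed
    have nu_le: "nu \<le> sqrt (real t * s)" unfolding nu_def using nu2_le by (rule real_sqrt_le_mono)
    define Q where "Q = (\<Sum>i<t. fro (X i - P i))"
    have Q_le: "Q \<le> 3 * sqrt (real t * s) * sqrt (real d) + 3 * (real t * s) + 3 * s"
    proof -
      have "Q \<le> (\<Sum>i<t. 3/2 * fro (Ym i - P i) + 3 * fro (Nm i))"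
        unfolding Q_def
      proof (rule sum_mono)
        fix i assume "i \<in> {..<t}"
        hence i: "i < t" by simp
        have YPc: "Ym i - P i \<in> carrier_mat d d" using Pc[OF i] by (rule minus_carrier_mat)
        have "X i - P i = (Ym i - P i) - Nm i"
          by (rule eq_matI, insert Ymc[OF i] Pc[OF i] Nmc[OF i] XYN[OF i], auto)
        thus "fro (X i - P i) \<le> 3/2 * fro (Ym i - P i) + 3 * fro (Nm i)"
          using fro_minus_le[OF YPc Nmc[OF i]] by simp
      qed
      also have "\<dots> = 3/2 * (\<Sum>i<t. fro (Ym i - P i)) + 3 * s"
        unfolding s_def using froN by (simp add: sum.distrib sum_distrib_left)
      also have "\<dots> \<le> 3/2 * (2 * nu * (sqrt (real d) + nu)) + 3 * s"
        using YPsum by simp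
      also have "\<dots> = 3 * nu * sqrt (real d) + 3 * nu2 + 3 * s"
        using nu_sq by (simp add: algebra_simps)
      also have "\<dots> \<le> 3 * sqrt (real t * s) * sqrt (real d) + 3 * (real t * s) + 3 * s"
        using nu_le nu2_le s_nonneg by (intro add_mono mult_right_mono, auto)
      finally show ?thesis .
    qed
    have "norm2' d t (\<lambda>i. R i - X i) = norm2' d t (\<lambda>i. X i - R i)" by (rule sym)
    also have "\<dots> \<le> norm2' d t (\<lambda>i. X i - P i)" by (rule R_argmin[OF subP])
    also have "\<dots> = Q / real d"
      unfolding Q_def using norm2_fro[of "\<lambda>i. X i - P i"] Pc by (simp add: minus_carrier_mat sum_divide_distrib)
    also have "\<dots> \<le> (3 * sqrt (real t * s) * sqrt (real d) + 3 * (real t * s) + 3 * s) / real d"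
      using Q_le dpos by (intro divide_right_mono, auto)
    also have "\<dots> = 3 * (real t + 1) / real d * s + 3 * sqrt (real t / real d * s)"
    proof -
      have sd: "sqrt (real d) * sqrt (real d) = real d" using dpos by simp
      have "sqrt (real t * s) * sqrt (real d) / real d = sqrt (real t / real d * s)"
        using dpos by (simp add: real_sqrt_mult real_sqrt_divide field_simps)
      moreover have "(3 * sqrt (real t * s) * sqrt (real d) + 3 * (real t * s) + 3 * s) / real d
          = 3 * (sqrt (real t * s) * sqrt (real d) / real d) + 3 * (real t + 1) / real d * s"
        using dpos by (simp add: field_simps)
      ultimately show ?thesis by simp
    qed
    also have "\<dots> \<le> 3 * (real t + 1) / real d * s + 6 * sqrt (real t / real d * s)" using s_nonneg by simp
    finally show ?thesis unfolding d_def[symmetric] s_eq .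
  qed
qed

end
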